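(* Let $\eta>0$ and consider the ODE on $\mathbb R^{|\mathcal S\times\mathcal A|}$ $$\dot Q_t=T(Q_t)-g_\eta(f(Q_t))\,e-Q_t .$$ This ODE is globally asymptotically stable and every solution satisfies $Q_t\to q^*$ as $t\to\infty$, where $q^*$ is the unique function satisfying $q^*(s,a)=r(s,a)-\rho^*+\sum_{s'}p(s'\mid s,a)\max_{a'}q^*(s',a')$ for all $(s,a)$ and $\rho^*=f(q^* )$, with $\rho^*$ the optimal average reward.
   Context: A finite MDP $(\mathcal S,\mathcal A,r,p)$, $\|r\|_\infty=\max_{s,a}|r(s,a)|$, such that for every stationary policy the induced Markov chain is ergodic; $\rho^*=\max_\pi \lim_{T\to\infty}\frac1T\mathbb E_\pi[\sum_{t=0}^T r(S_t,A_t)]$. $e$ is the all-ones vector. $T(Q)(s,a)=r(s,a)+\sum_{s'}p(s'\mid s,a)\max_{a'}Q(s',a')$. $f:\mathbb R^{|\mathcal S\times\mathcal A|}\to\mathbb R$ is Lipschitz and there is $u>0$ with $f(e)=u$, $f(x+ce)=f(x)+cu$, $f(cx)=cf(x)$ for all $c\in\mathbb R$, $x$. The clip function is $g_\eta(x)=\min\{\max\{x,-\|r\|_\infty-\eta\},\|r\|_\infty+\eta\}$. *)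

theory Defs
  imports "HOL-Analysis.Analysis"
begin

text \<open>Finite MDP with state type 's and action type 'a (both finite).
  Rewards r s a, transition probabilities p s a s'.  Functions on S x A
  are vectors of type real ^ ('s \<times> 'a).\<close>

definition is_mdp :: "('s::finite \<Rightarrow> 'a::finite \<Rightarrow> 's \<Rightarrow> real) \<Rightarrow> bool" where
  "is_mdp p \<longleftrightarrow> (\<forall>s a s'. 0 \<le> p s a s') \<and> (\<forall>s a. (\<Sum>s'\<in>UNIV. p s a s') = 1)"

text \<open>Ergodicity (Puterman): for every deterministic stationary policy the induced
  chain consists of a single recurrent class, i.e. (finite chain) it is irreducible.\<close>
definition ergodic_mdp :: "('s::finite \<Rightarrow> 'a::finite \<Rightarrow> 's \<Rightarrow> real) \<Rightarrow> bool" where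
  "ergodic_mdp p \<longleftrightarrow>
     (\<forall>\<pi>::'s \<Rightarrow> 'a. \<forall>s s'. (s, s') \<in> {(x, y). 0 < p x (\<pi> x) y}\<^sup>+)"

text \<open>Markov randomized (possibly non-stationary) policies: pi t s a is the
  probability of choosing a in s at time t.\<close>
definition markov_policy :: "(nat \<Rightarrow> 's::finite \<Rightarrow> 'a::finite \<Rightarrow> real) \<Rightarrow> bool" where
  "markov_policy \<pi> \<longleftrightarrow> (\<forall>t s a. 0 \<le> \<pi> t s a) \<and> (\<forall>t s. (\<Sum>a\<in>UNIV. \<pi> t s a) = 1)"

primrec state_dist ::
  "('s::finite \<Rightarrow> 'a::finite \<Rightarrow> 's \<Rightarrow> real) \<Rightarrow> (nat \<Rightarrow> 's \<Rightarrow> 'a \<Rightarrow> real) \<Rightarrow> 's \<Rightarrow> nat \<Rightarrow> 's \<Rightarrow> real" where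
  "state_dist p \<pi> s0 0 = (\<lambda>s. if s = s0 then 1 else 0)"
| "state_dist p \<pi> s0 (Suc t) =
     (\<lambda>s'. \<Sum>s\<in>UNIV. \<Sum>a\<in>UNIV. state_dist p \<pi> s0 t s * \<pi> t s a * p s a s')"

definition exp_reward ::
  "('s::finite \<Rightarrow> 'a::finite \<Rightarrow> real) \<Rightarrow> ('s \<Rightarrow> 'a \<Rightarrow> 's \<Rightarrow> real) \<Rightarrow> (nat \<Rightarrow> 's \<Rightarrow> 'a \<Rightarrow> real)
    \<Rightarrow> 's \<Rightarrow> nat \<Rightarrow> real" where
  "exp_reward r p \<pi> s0 t = (\<Sum>s\<in>UNIV. \<Sum>a\<in>UNIV. state_dist p \<pi> s0 t s * \<pi> t s a * r s a)"

definition avg_reward ::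
  "('s::finite \<Rightarrow> 'a::finite \<Rightarrow> real) \<Rightarrow> ('s \<Rightarrow> 'a \<Rightarrow> 's \<Rightarrow> real) \<Rightarrow> (nat \<Rightarrow> 's \<Rightarrow> 'a \<Rightarrow> real)
    \<Rightarrow> 's \<Rightarrow> nat \<Rightarrow> real" where
  "avg_reward r p \<pi> s0 T = (\<Sum>t\<le>T. exp_reward r p \<pi> s0 t) / real T"

definition opt_avg_reward ::
  "('s::finite \<Rightarrow> 'a::finite \<Rightarrow> real) \<Rightarrow> ('s \<Rightarrow> 'a \<Rightarrow> 's \<Rightarrow> real) \<Rightarrow> 's \<Rightarrow> real" where
  "opt_avg_reward r p s0 =
     Sup {L. \<exists>\<pi>. markov_policy \<pi> \<and> (avg_reward r p \<pi> s0 \<longlonglongrightarrow> L)}"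

definition rnorm :: "('s::finite \<Rightarrow> 'a::finite \<Rightarrow> real) \<Rightarrow> real" where
  "rnorm r = Max {\<bar>r s a\<bar> | s a. True}"

definition allones :: "real ^ ('s::finite \<times> 'a::finite)" where
  "allones = (\<chi> i. 1)"

definition Tbell ::
  "('s::finite \<Rightarrow> 'a::finite \<Rightarrow> real) \<Rightarrow> ('s \<Rightarrow> 'a \<Rightarrow> 's \<Rightarrow> real)
     \<Rightarrow> real ^ ('s \<times> 'a) \<Rightarrow> real ^ ('s \<times> 'a)" where
  "Tbell r p Q = (\<chi> i. r (fst i) (snd i) + (\<Sum>s'\<in>UNIV. p (fst i) (snd i) s' * (MAX a'. Q $ (s', a'))))"

definition clip :: "real \<Rightarrow> real \<Rightarrow> real \<Rightarrow> real" where
  "clip R \<eta> x = min (max x (- R - \<eta>)) (R + \<eta>)"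

definition ode_solution :: "('v::real_normed_vector \<Rightarrow> 'v) \<Rightarrow> (real \<Rightarrow> 'v) \<Rightarrow> bool" where
  "ode_solution F Q \<longleftrightarrow> (\<forall>t\<ge>0. (Q has_vector_derivative F (Q t)) (at t within {0..}))"

definition globally_asymptotically_stable :: "('v::real_normed_vector \<Rightarrow> 'v) \<Rightarrow> 'v \<Rightarrow> bool" where
  "globally_asymptotically_stable F x0 \<longleftrightarrow>
     F x0 = 0 \<and>
     (\<forall>\<epsilon>>0. \<exists>\<delta>>0. \<forall>Q. ode_solution F Q \<and> dist (Q 0) x0 < \<delta> \<longrightarrow> (\<forall>t\<ge>0. dist (Q t) x0 < \<epsilon>)) \<and>
     (\<forall>Q. ode_solution F Q \<longrightarrow> (Q \<longlongrightarrow> x0) at_top)"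

end

theory Submission
  imports Defs "HOL-Real_Asymp.Real_Asymp"
begin

lemma Max_fin_ge: "(f::'a::finite \<Rightarrow> real) a \<le> (MAX a. f a)"
  by (simp)

lemma Max_fin_ex: "\<exists>a. (MAX a. (f::'a::finite\<Rightarrow>real) a) = f a"
proof -
  have "(MAX a. f a) \<in> range f" by (rule Max_in) auto
  then show ?thesis by blast
qed

lemma Max_fin_le_iff: "(MAX a. (f::'a::finite\<Rightarrow>real) a) \<le> c \<longleftrightarrow> (\<forall>a. f a \<le> c)"
  by simp

lemma Max_fin_ge_iff: "c \<le> (MAX a. (f::'a::finite\<Rightarrow>real) a) \<longleftrightarrow> (\<exists>a. c \<le> f a)"
  by (simp add: Max_ge_iff)

lemma Max_fin_mono: "(\<And>a. (f::'a::finite\<Rightarrow>real) a \<le> g a) \<Longrightarrow> (MAX a. f a) \<le> (MAX a. g a)"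
  by (meson Max_fin_ge Max_fin_le_iff order_trans)

lemma Max_fin_add: "(MAX a. (f::'a::finite\<Rightarrow>real) a + k) = (MAX a. f a) + k"
  using Max_add_commute[of UNIV f k] by simp

lemma tendsto_Max_set:
  fixes g :: "'a \<Rightarrow> 'b \<Rightarrow> real"
  assumes "finite A" "A \<noteq> {}" "\<And>a. a \<in> A \<Longrightarrow> ((\<lambda>n. g a n) \<longlongrightarrow> l a) F"
  shows "((\<lambda>n. Max ((\<lambda>a. g a n) ` A)) \<longlongrightarrow> Max (l ` A)) F"
  using assms
proof (induction A rule: finite_ne_induct)
  case (singleton x)
  then show ?case by simp
next
  case (insert x A)
  have "((\<lambda>n. max (g x n) (Max ((\<lambda>a. g a n) ` A))) \<longlongrightarrow> max (l x) (Max (l ` A))) F"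
    by (intro tendsto_max) (use insert in auto)
  then show ?case using insert by (simp add: Max_insert)
qed

lemma tendsto_Max_fin:
  fixes g :: "'a::finite \<Rightarrow> 'b \<Rightarrow> real"
  assumes "\<And>a. ((\<lambda>n. g a n) \<longlongrightarrow> l a) F"
  shows "((\<lambda>n. MAX a. g a n) \<longlongrightarrow> (MAX a. l a)) F"
  using tendsto_Max_set[of UNIV g l F] assms by auto

lemma continuous_on_Max_set:
  fixes g :: "'a \<Rightarrow> 'b::topological_space \<Rightarrow> real"
  assumes "finite A" "A \<noteq> {}" "\<And>a. a \<in> A \<Longrightarrow> continuous_on S (g a)"
  shows "continuous_on S (\<lambda>x. Max ((\<lambda>a. g a x) ` A))"
  using assms
proof (induction A rule: finite_ne_induct)
  case (singleton x)
  then show ?case by simp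
next
  case (insert x A)
  have "continuous_on S (\<lambda>n. max (g x n) (Max ((\<lambda>a. g a n) ` A)))"
    by (intro continuous_on_max) (use insert in auto)
  then show ?case using insert by (simp add: Max_insert)
qed

lemma continuous_on_Max_fin:
  fixes g :: "'a::finite \<Rightarrow> 'b::topological_space \<Rightarrow> real"
  assumes "\<And>a. continuous_on S (g a)"
  shows "continuous_on S (\<lambda>x. MAX a. g a x)"
  using continuous_on_Max_set[where A=UNIV and g=g and S=S] assms by auto

primrec bnd :: "real \<Rightarrow> real \<Rightarrow> nat \<Rightarrow> real" where
  "bnd R d 0 = 0"
| "bnd R d (Suc k) = 2 * (bnd R d k + 2 * R) / d"

lemma bnd_nonneg: "0 \<le> R \<Longrightarrow> 0 < d \<Longrightarrow> 0 \<le> bnd R d k"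
  by (induction k) auto

lemma bnd_mono_Suc: "0 \<le> R \<Longrightarrow> 0 < d \<Longrightarrow> d \<le> 1 \<Longrightarrow> bnd R d k \<le> bnd R d (Suc k)"
proof -
  assume a: "0 \<le> R" "0 < d" "d \<le> 1"
  have b: "0 \<le> bnd R d k" using bnd_nonneg a by auto
  have "bnd R d k \<le> 2 * (bnd R d k + 2 * R)" using a b by auto
  also have "\<dots> \<le> 2 * (bnd R d k + 2 * R) / d"
  proof -
    have "2 * (bnd R d k + 2 * R) * d \<le> 2 * (bnd R d k + 2 * R) * 1"
      by (rule mult_left_mono) (use a b in auto)
    then show ?thesis using a by (simp add: le_divide_eq)
  qed
  finally show ?thesis by simp
qed

lemma bnd_mono:
  assumes "0 \<le> R" "0 < d" "d \<le> 1" "k \<le> n" shows "bnd R d k \<le> bnd R d n"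
proof -
  have "\<And>m. bnd R d m \<le> bnd R d (Suc m)" using bnd_mono_Suc assms(1-3) by blast
  then show ?thesis using lift_Suc_mono_le[of "bnd R d" k n] assms(4) by blast
qed

lemma ex_min_fin: "\<exists>x. \<forall>y. (f::'a::finite \<Rightarrow> real) x \<le> f y"
proof -
  have "(MIN a. f a) \<in> range f" by (rule Min_in) auto
  then obtain x where x: "(MIN a. f a) = f x" by blast
  have "\<And>y. (MIN a. f a) \<le> f y" by (rule Min_le) auto
  then show ?thesis using x by metis
qed

lemma ex_max_fin: "\<exists>x. \<forall>y. (f::'a::finite \<Rightarrow> real) y \<le> f x"
  using ex_min_fin[of "\<lambda>x. - f x"] by auto

locale mdpl =
  fixes r :: "'s::finite \<Rightarrow> 'a::finite \<Rightarrow> real" and p :: "'s \<Rightarrow> 'a \<Rightarrow> 's \<Rightarrow> real"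
  assumes mdp: "is_mdp p" and erg: "ergodic_mdp p"
begin

lemma p_nonneg: "0 \<le> p s a s'" using mdp unfolding is_mdp_def by auto
lemma p_sum: "(\<Sum>s'\<in>UNIV. p s a s') = 1" using mdp unfolding is_mdp_def by auto
lemma p_le1: "p s a s' \<le> 1"
  using member_le_sum[of s' UNIV "p s a"] p_nonneg p_sum by auto

lemma erg': "(x, y) \<in> {(x, y). 0 < p x (\<pi> x) y}\<^sup>+"
  using erg unfolding ergodic_mdp_def by blast

lemma p_sum_const: "(\<Sum>s'\<in>UNIV. p s a s' * c) = c"
  by (simp add: sum_distrib_right[symmetric] p_sum)

definition pmin where "pmin = Min ((\<lambda>(s,a,s'). p s a s') ` UNIV \<inter> {0<..})"

lemma pmin_props: "0 < pmin" "0 < p s a s' \<Longrightarrow> pmin \<le> p s a s'"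
proof -
  let ?A = "(\<lambda>(s,a,s'). p s a s') ` UNIV \<inter> {0<..}"
  have fin: "finite ?A" by auto
  obtain s0 :: 's and a0 :: 'a where True by auto
  have "\<exists>s'. 0 < p s0 a0 s'"
  proof (rule ccontr)
    assume "\<not> ?thesis"
    then have "(\<Sum>s'\<in>UNIV. p s0 a0 s') \<le> 0" by (intro sum_nonpos) (meson not_less)
    then show False using p_sum by simp
  qed
  then obtain t' where "0 < p s0 a0 t'" by blast
  then have "p s0 a0 t' \<in> ?A" by (auto intro!: image_eqI[where x="(s0,a0,t')"])
  then have ne: "?A \<noteq> {}" by blast
  show "0 < pmin" unfolding pmin_def using Min_in[OF fin ne] by auto
  show "0 < p s a s' \<Longrightarrow> pmin \<le> p s a s'" unfolding pmin_def
    by (rule Min_le[OF fin]) (auto intro!: image_eqI[where x="(s,a,s')"])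
qed

lemma pmin_le1: "pmin \<le> 1"
proof -
  obtain s0 :: 's and a0 :: 'a where True by auto
  have "\<exists>s'. 0 < p s0 a0 s'"
  proof (rule ccontr)
    assume "\<not> ?thesis"
    then have "(\<Sum>s'\<in>UNIV. p s0 a0 s') \<le> 0" by (intro sum_nonpos) (meson not_less)
    then show False using p_sum by simp
  qed
  then obtain s' where "0 < p s0 a0 s'" by blast
  then show ?thesis using pmin_props(2) p_le1 order_trans by blast
qed

lemma r_bound: "\<bar>r s a\<bar> \<le> rnorm r"
proof -
  have e: "{\<bar>r s a\<bar> | s a. True} = (\<lambda>(s,a). \<bar>r s a\<bar>) ` UNIV" by auto
  show ?thesis unfolding rnorm_def e by (rule Max_ge) auto
qed

lemma R_nonneg: "0 \<le> rnorm r"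
  using r_bound[of undefined undefined] by linarith

definition Tb :: "real \<Rightarrow> real^'s \<Rightarrow> real^'s" where
  "Tb \<beta> V = (\<chi> s. MAX a. r s a + \<beta> * (\<Sum>s'\<in>UNIV. p s a s' * V$s'))"

lemma disc_fix:
  assumes b: "0 \<le> \<beta>" "\<beta> < 1"
  shows "\<exists>V. Tb \<beta> V = V \<and> (\<forall>s. \<bar>V$s\<bar> \<le> rnorm r/(1-\<beta>))"
proof -
  define c where "c = rnorm r/(1-\<beta>)"
  have c0: "0 \<le> c" unfolding c_def using b R_nonneg by auto
  have cR: "rnorm r + \<beta> * c = c" unfolding c_def using b by (simp add: field_simps)
  let ?S = "cbox (\<chi> s. -c) (\<chi> s. c) :: (real^'s) set"
  have memS: "V \<in> ?S \<longleftrightarrow> (\<forall>s. \<bar>V$s\<bar> \<le> c)" for V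
    unfolding mem_box_cart abs_le_iff by (simp add: minus_le_iff conj_commute)
  have cont: "continuous_on ?S (Tb \<beta>)" unfolding Tb_def
    by (intro continuous_on_vec_lambda continuous_on_Max_fin continuous_intros)
  have into: "Tb \<beta> \<in> ?S \<rightarrow> ?S"
  proof
    fix V assume "V \<in> ?S" then have V: "\<bar>V$s\<bar> \<le> c" for s using memS by auto
    have trm: "\<bar>r s a + \<beta> * (\<Sum>s'\<in>UNIV. p s a s' * V$s')\<bar> \<le> c" for s a
    proof -
      have "\<bar>\<Sum>s'\<in>UNIV. p s a s' * V$s'\<bar> \<le> (\<Sum>s'\<in>UNIV. \<bar>p s a s' * V$s'\<bar>)" by (rule sum_abs)
      also have "\<dots> \<le> (\<Sum>s'\<in>UNIV. p s a s' * c)"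
        by (intro sum_mono) (simp add: abs_mult p_nonneg V mult_left_mono)
      also have "\<dots> = c" by (rule p_sum_const)
      finally have "\<bar>\<Sum>s'\<in>UNIV. p s a s' * V$s'\<bar> \<le> c" .
      then have "\<bar>\<beta> * (\<Sum>s'\<in>UNIV. p s a s' * V$s')\<bar> \<le> \<beta> * c"
        using b by (simp add: abs_mult mult_left_mono)
      then show ?thesis using r_bound[of s a] cR by linarith
    qed
    show "Tb \<beta> V \<in> ?S" unfolding memS
    proof
      fix s
      have "(MAX a. r s a + \<beta> * (\<Sum>s'\<in>UNIV. p s a s' * V$s')) \<le> c"
        using trm by (simp add: abs_le_iff)
      moreover have "-c \<le> (MAX a. r s a + \<beta> * (\<Sum>s'\<in>UNIV. p s a s' * V$s'))"
      proof -
        have "-c \<le> r s undefined + \<beta> * (\<Sum>s'\<in>UNIV. p s undefined s' * V$s')"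
          using trm[of s undefined] by (simp add: abs_le_iff)
        also have "\<dots> \<le> (MAX a. r s a + \<beta> * (\<Sum>s'\<in>UNIV. p s a s' * V$s'))"
          by (rule Max_fin_ge)
        finally show ?thesis .
      qed
      ultimately show "\<bar>Tb \<beta> V $ s\<bar> \<le> c" unfolding Tb_def vec_lambda_beta abs_le_iff by linarith
    qed
  qed
  have ne: "?S \<noteq> {}" using memS[of 0] c0 by auto
  obtain V where "V \<in> ?S" "Tb \<beta> V = V"
    by (rule brouwer[OF compact_cbox convex_box(1) ne cont into])
  then show ?thesis using memS c_def by auto
qed

end

context mdpl begin

lemma disc_span:
  assumes b: "1/2 \<le> \<beta>" "\<beta> < 1" and fx: "Tb \<beta> V = V" and bd: "\<forall>s. \<bar>V$s\<bar> \<le> rnorm r/(1-\<beta>)"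
  shows "V$x - V$y \<le> bnd (rnorm r) pmin CARD('s \<times> 's)"
proof -
  define R where "R = rnorm r"
  have R0: "0 \<le> R" using R_nonneg R_def by simp
  obtain smin where smin: "\<And>s. V$smin \<le> V$s" using ex_min_fin[of "\<lambda>s. V$s"] by blast
  define g where "g s a = r s a + \<beta> * (\<Sum>s'\<in>UNIV. p s a s' * V$s')" for s a
  define \<pi> where "\<pi> s = (SOME a. \<forall>a'. g s a' \<le> g s a)" for s
  have \<pi>: "g s a' \<le> g s (\<pi> s)" for s a'
    using someI_ex[OF ex_max_fin[of "g s"]] unfolding \<pi>_def by blast
  have Vs: "V$s = g s (\<pi> s)" for s
  proof -
    have "V$s = Tb \<beta> V $ s" using fx by simp
    also have "\<dots> = (MAX a. g s a)" unfolding Tb_def g_def by simp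
    also have "\<dots> = g s (\<pi> s)"
      by (intro antisym) (auto simp: \<pi> Max_fin_le_iff intro: Max_fin_ge)
    finally show ?thesis .
  qed
  have Vsmin: "\<bar>(1-\<beta>) * V$smin\<bar> \<le> R"
  proof -
    have "\<bar>(1-\<beta>) * V$smin\<bar> = (1-\<beta>) * \<bar>V$smin\<bar>" using b by (simp add: abs_mult)
    also have "\<dots> \<le> (1-\<beta>) * (rnorm r/(1-\<beta>))" using bd b by (intro mult_left_mono) auto
    also have "\<dots> = R" using b R_def by simp
    finally show ?thesis .
  qed
  define Rel where "Rel = {(x, y). 0 < p x (\<pi> x) y}"
  have pm: "0 < pmin" "pmin \<le> 1" using pmin_props(1) pmin_le1 by auto
  have step: "V$x - V$smin \<le> bnd R pmin n" if "(smin, x) \<in> Rel ^^ n" for n x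
    using that
  proof (induction n arbitrary: x)
    case 0
    then show ?case by simp
  next
    case (Suc n)
    from Suc.prems obtain z where z: "(smin, z) \<in> Rel ^^ n" "(z, x) \<in> Rel" by (rule relpow_Suc_E)
    have IH: "V$z - V$smin \<le> bnd R pmin n" using Suc.IH z(1) by blast
    have px: "0 < p z (\<pi> z) x" using z(2) Rel_def by auto
    define w where "w s = V$s - V$smin" for s
    have w0: "0 \<le> w s" for s using smin w_def by auto
    have sumw: "(\<Sum>s'\<in>UNIV. p z (\<pi> z) s' * V$s') = (\<Sum>s'\<in>UNIV. p z (\<pi> z) s' * w s') + V$smin"
      unfolding w_def by (simp add: right_diff_distrib sum_subtractf p_sum_const)
    have ge: "p z (\<pi> z) x * w x \<le> (\<Sum>s'\<in>UNIV. p z (\<pi> z) s' * w s')"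
      by (rule member_le_sum) (auto simp: p_nonneg w0)
    have "V$z - V$smin = r z (\<pi> z) - (1-\<beta>) * V$smin + \<beta> * (\<Sum>s'\<in>UNIV. p z (\<pi> z) s' * w s')"
      using Vs[of z] unfolding g_def sumw by (simp add: algebra_simps)
    moreover have "\<beta> * (p z (\<pi> z) x * w x) \<le> \<beta> * (\<Sum>s'\<in>UNIV. p z (\<pi> z) s' * w s')"
      using ge b by (intro mult_left_mono) auto
    ultimately have A: "\<beta> * p z (\<pi> z) x * w x \<le> bnd R pmin n + 2 * R"
      using IH r_bound[of z "\<pi> z"] Vsmin R_def by (simp add: abs_le_iff)
    have B: "pmin / 2 * w x \<le> \<beta> * p z (\<pi> z) x * w x"
    proof -
      have "pmin / 2 \<le> \<beta> * p z (\<pi> z) x"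
      proof -
        have "pmin \<le> p z (\<pi> z) x" using pmin_props(2) px by blast
        then have "pmin / 2 \<le> 1/2 * p z (\<pi> z) x" by simp
        also have "\<dots> \<le> \<beta> * p z (\<pi> z) x" using b p_nonneg by (intro mult_right_mono) auto
        finally show ?thesis .
      qed
      then show ?thesis using w0[of x] by (intro mult_right_mono) auto
    qed
    have "w x \<le> 2 * (bnd R pmin n + 2 * R) / pmin"
      using A B pm by (simp add: field_simps)
    then show ?case unfolding w_def by simp
  qed
  have finRel: "finite Rel" by simp
  have "(smin, x) \<in> Rel\<^sup>+" unfolding Rel_def by (rule erg')
  then obtain n where n: "0 < n" "n \<le> card Rel" "(smin, x) \<in> Rel ^^ n"
    using trancl_finite_eq_relpow[OF finRel] by blast
  have cRel: "card Rel \<le> CARD('s \<times> 's)" by (rule card_mono) auto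
  have "V$x - V$smin \<le> bnd R pmin n" using step n(3) .
  also have "\<dots> \<le> bnd R pmin CARD('s \<times> 's)"
    using bnd_mono[OF R0 pm] n(2) cRel by simp
  finally show ?thesis using smin[of y] R_def by simp
qed

end

context mdpl begin

lemma exists_sol:
  "\<exists>q \<rho>. \<forall>s a. q $ (s, a) = r s a - \<rho> + (\<Sum>s'\<in>UNIV. p s a s' * (MAX a'. q $ (s', a')))"
proof -
  define B where "B = bnd (rnorm r) pmin CARD('s \<times> 's)"
  define \<beta> where "\<beta> n = 1 - 1 / (real n + 2)" for n
  have b: "1/2 \<le> \<beta> n" "\<beta> n < 1" "0 \<le> \<beta> n" for n unfolding \<beta>_def by (auto simp: field_simps)
  define V where "V n = (SOME V. Tb (\<beta> n) V = V \<and> (\<forall>s. \<bar>V$s\<bar> \<le> rnorm r/(1-\<beta> n)))" for n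
  have V: "Tb (\<beta> n) (V n) = V n" "\<forall>s. \<bar>V n $ s\<bar> \<le> rnorm r/(1-\<beta> n)" for n
    using someI_ex[OF disc_fix[OF b(3) b(2)]] unfolding V_def by blast+
  have span: "V n $ x - V n $ y \<le> B" for n x y
    unfolding B_def by (rule disc_span[OF b(1,2) V(1) V(2)])
  obtain s0 :: 's where True by auto
  define h where "h n = (\<chi> s. V n $ s - V n $ s0)" for n
  define \<rho> where "\<rho> n = (1 - \<beta> n) * V n $ s0" for n
  have hb: "\<bar>h n $ s\<bar> \<le> B" for n s unfolding h_def using span[of n s s0] span[of n s0 s] by auto
  have \<rho>b: "\<bar>\<rho> n\<bar> \<le> rnorm r" for n
  proof -
    have "\<bar>\<rho> n\<bar> = (1 - \<beta> n) * \<bar>V n $ s0\<bar>" unfolding \<rho>_def using b[of n] by (simp add: abs_mult)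
    also have "\<dots> \<le> (1 - \<beta> n) * (rnorm r/(1-\<beta> n))" using V(2) b[of n] by (intro mult_left_mono) auto
    also have "\<dots> = rnorm r" using b[of n] by simp
    finally show ?thesis .
  qed
  have eqn: "h n $ s + \<rho> n = (MAX a. r s a + \<beta> n * (\<Sum>s'\<in>UNIV. p s a s' * h n $ s'))" for n s
  proof -
    have sh: "(\<Sum>s'\<in>UNIV. p s a s' * V n $ s') = (\<Sum>s'\<in>UNIV. p s a s' * h n $ s') + V n $ s0" for a
      unfolding h_def by (simp add: right_diff_distrib sum_subtractf p_sum_const)
    have "V n $ s = Tb (\<beta> n) (V n) $ s" using V(1)[of n] by simp
    also have "\<dots> = (MAX a. r s a + \<beta> n * (\<Sum>s'\<in>UNIV. p s a s' * V n $ s'))"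
      unfolding Tb_def by simp
    also have "\<dots> = (MAX a. (r s a + \<beta> n * (\<Sum>s'\<in>UNIV. p s a s' * h n $ s')) + \<beta> n * V n $ s0)"
      unfolding sh by (simp add: algebra_simps)
    also have "\<dots> = (MAX a. r s a + \<beta> n * (\<Sum>s'\<in>UNIV. p s a s' * h n $ s')) + \<beta> n * V n $ s0"
      by (rule Max_fin_add)
    finally show ?thesis unfolding h_def \<rho>_def by (simp add: algebra_simps)
  qed
  have bh: "bounded (range h)"
    unfolding bounded_iff
  proof (intro exI ballI)
    fix x assume "x \<in> range h"
    then obtain n where x: "x = h n" by blast
    have "norm x \<le> (\<Sum>i\<in>UNIV. \<bar>x $ i\<bar>)" by (rule norm_le_l1_cart)
    also have "\<dots> \<le> (\<Sum>i\<in>(UNIV::'s set). B)" using hb x by (intro sum_mono) auto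
    finally show "norm x \<le> (\<Sum>i\<in>(UNIV::'s set). B)" .
  qed
  have b\<rho>: "bounded (range \<rho>)"
    unfolding bounded_iff using \<rho>b by auto
  have "bounded (range (\<lambda>n. (h n, \<rho> n)))"
    by (rule bounded_subset[OF bounded_Times[OF bh b\<rho>]]) auto
  then obtain l \<sigma> where \<sigma>: "strict_mono \<sigma>" "((\<lambda>n. (h n, \<rho> n)) \<circ> \<sigma>) \<longlonglongrightarrow> l"
    using bounded_imp_convergent_subsequence by blast
  define hl where "hl = fst l"
  define \<rho>l where "\<rho>l = snd l"
  have hlim: "(\<lambda>n. h (\<sigma> n)) \<longlonglongrightarrow> hl" unfolding hl_def using tendsto_fst[OF \<sigma>(2)] by (simp add: o_def)
  have \<rho>lim: "(\<lambda>n. \<rho> (\<sigma> n)) \<longlonglongrightarrow> \<rho>l" unfolding \<rho>l_def using tendsto_snd[OF \<sigma>(2)] by (simp add: o_def)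
  have \<beta>lim0: "\<beta> \<longlonglongrightarrow> 1" unfolding \<beta>_def by real_asymp
  have \<beta>lim: "(\<lambda>n. \<beta> (\<sigma> n)) \<longlonglongrightarrow> 1" using LIMSEQ_subseq_LIMSEQ[OF \<beta>lim0 \<sigma>(1)] by (simp add: o_def)
  have leq: "hl $ s + \<rho>l = (MAX a. r s a + (\<Sum>s'\<in>UNIV. p s a s' * hl $ s'))" for s
  proof -
    have L1: "(\<lambda>n. h (\<sigma> n) $ s + \<rho> (\<sigma> n)) \<longlonglongrightarrow> hl $ s + \<rho>l"
      by (intro tendsto_intros hlim \<rho>lim)
    have L2: "(\<lambda>n. MAX a. r s a + \<beta> (\<sigma> n) * (\<Sum>s'\<in>UNIV. p s a s' * h (\<sigma> n) $ s'))
        \<longlonglongrightarrow> (MAX a. r s a + 1 * (\<Sum>s'\<in>UNIV. p s a s' * hl $ s'))"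
      by (intro tendsto_Max_fin tendsto_intros hlim \<beta>lim)
    have "hl $ s + \<rho>l = (MAX a. r s a + 1 * (\<Sum>s'\<in>UNIV. p s a s' * hl $ s'))"
      using LIMSEQ_unique[OF L1 L2[folded eqn]] .
    then show ?thesis by simp
  qed
  define q where "q = (\<chi> i. r (fst i) (snd i) - \<rho>l + (\<Sum>s'\<in>UNIV. p (fst i) (snd i) s' * hl $ s'))"
  have qmax: "(MAX a'. q $ (s', a')) = hl $ s'" for s'
  proof -
    have "(MAX a'. q $ (s', a')) = (MAX a'. (r s' a' + (\<Sum>s''\<in>UNIV. p s' a' s'' * hl $ s'')) + (- \<rho>l))"
      unfolding q_def by (simp add: algebra_simps)
    also have "\<dots> = (MAX a'. r s' a' + (\<Sum>s''\<in>UNIV. p s' a' s'' * hl $ s'')) + (- \<rho>l)"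
      by (rule Max_fin_add)
    also have "\<dots> = hl $ s'" using leq[of s'] by simp
    finally show ?thesis .
  qed
  have "\<forall>s a. q $ (s, a) = r s a - \<rho>l + (\<Sum>s'\<in>UNIV. p s a s' * (MAX a'. q $ (s', a')))"
    unfolding qmax by (simp add: q_def)
  then show ?thesis by blast
qed

end

context mdpl begin

lemma uniq_shift:
  assumes e1: "\<forall>s a. q1 $ (s, a) = r s a - \<rho> + (\<Sum>s'\<in>UNIV. p s a s' * (MAX a'. q1 $ (s', a')))"
      and e2: "\<forall>s a. q2 $ (s, a) = r s a - \<rho> + (\<Sum>s'\<in>UNIV. p s a s' * (MAX a'. q2 $ (s', a')))"
  shows "\<exists>D. q1 = q2 + D *\<^sub>R allones"
proof -
  define \<delta> where "\<delta> s = (MAX a'. q1 $ (s, a')) - (MAX a'. q2 $ (s, a'))" for s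
  have dq: "q1 $ (s, a) - q2 $ (s, a) = (\<Sum>s'\<in>UNIV. p s a s' * \<delta> s')" for s a
    using e1[rule_format, of s a] e2[rule_format, of s a] unfolding \<delta>_def
    by (simp add: right_diff_distrib sum_subtractf)
  define \<pi> where "\<pi> s = (SOME a. \<forall>a'. q1 $ (s, a') \<le> q1 $ (s, a))" for s
  have \<pi>: "q1 $ (s, a') \<le> q1 $ (s, \<pi> s)" for s a'
    using someI_ex[OF ex_max_fin[of "\<lambda>a. q1 $ (s, a)"]] unfolding \<pi>_def by blast
  have h1: "(MAX a'. q1 $ (s, a')) = q1 $ (s, \<pi> s)" for s
    by (intro antisym) (auto simp: \<pi> Max_fin_le_iff intro: Max_fin_ge)
  have sub: "\<delta> s \<le> (\<Sum>s'\<in>UNIV. p s (\<pi> s) s' * \<delta> s')" for s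
  proof -
    have "q2 $ (s, \<pi> s) \<le> (MAX a'. q2 $ (s, a'))" by (rule Max_fin_ge)
    moreover have "\<delta> s = q1 $ (s, \<pi> s) - (MAX a'. q2 $ (s, a'))" unfolding \<delta>_def h1 ..
    ultimately show ?thesis using dq[of s "\<pi> s"] by linarith
  qed
  obtain smax where smax: "\<And>s. \<delta> s \<le> \<delta> smax" using ex_max_fin[of \<delta>] by blast
  define Rel where "Rel = {(x, y). 0 < p x (\<pi> x) y}"
  have prp: "\<delta> x = \<delta> smax \<Longrightarrow> (x, y) \<in> Rel \<Longrightarrow> \<delta> y = \<delta> smax" for x y
  proof (rule ccontr)
    assume a: "\<delta> x = \<delta> smax" "(x, y) \<in> Rel" "\<delta> y \<noteq> \<delta> smax"
    have "(\<Sum>s'\<in>UNIV. p x (\<pi> x) s' * \<delta> s') < (\<Sum>s'\<in>UNIV. p x (\<pi> x) s' * \<delta> smax)"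
    proof (rule sum_strict_mono_ex1)
      show "\<forall>s'\<in>UNIV. p x (\<pi> x) s' * \<delta> s' \<le> p x (\<pi> x) s' * \<delta> smax"
        using smax p_nonneg by (simp add: mult_left_mono)
      have "\<delta> y < \<delta> smax" using smax[of y] a(3) by simp
      then show "\<exists>s'\<in>UNIV. p x (\<pi> x) s' * \<delta> s' < p x (\<pi> x) s' * \<delta> smax"
        using a(2) unfolding Rel_def by (intro bexI[of _ y]) auto
    qed auto
    then show False using sub[of x] a(1) p_sum_const by simp
  qed
  have all: "\<delta> y = \<delta> smax" for y
  proof -
    have "(smax, y) \<in> Rel\<^sup>+" unfolding Rel_def by (rule erg')
    then show ?thesis
      by (induction rule: trancl_induct) (auto intro: prp)
  qed
  show ?thesis
  proof (intro exI[of _ "\<delta> smax"])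
    show "q1 = q2 + \<delta> smax *\<^sub>R allones"
    proof (rule vec_eq_iff[THEN iffD2], intro allI)
      fix i :: "'s \<times> 'a"
      obtain s a where i: "i = (s, a)" by (cases i)
      have "(\<Sum>s'\<in>UNIV. p s a s' * \<delta> s') = (\<Sum>s'\<in>UNIV. p s a s' * \<delta> smax)"
        by (rule sum.cong[OF refl]) (subst all, rule refl)
      then have "q1 $ (s, a) = q2 $ (s, a) + (\<Sum>s'\<in>UNIV. p s a s' * \<delta> smax)" using dq[of s a] by linarith
      then show "q1 $ i = (q2 + \<delta> smax *\<^sub>R allones) $ i"
        unfolding i allones_def by (simp add: p_sum_const)
    qed
  qed
qed

end

context mdpl begin

lemma sd_nonneg: assumes "markov_policy \<pi>" shows "0 \<le> state_dist p \<pi> s0 t s"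
  using assms
  by (induction t arbitrary: s) (auto simp: markov_policy_def intro!: sum_nonneg mult_nonneg_nonneg p_nonneg)

lemma sd_sum: assumes mp: "markov_policy \<pi>" shows "(\<Sum>s\<in>UNIV. state_dist p \<pi> s0 t s) = 1"
proof (induction t)
  case 0
  show ?case by simp
next
  case (Suc t)
  let ?d = "state_dist p \<pi> s0 t"
  have "(\<Sum>s'\<in>UNIV. state_dist p \<pi> s0 (Suc t) s')
      = (\<Sum>s'\<in>UNIV. \<Sum>s\<in>UNIV. \<Sum>a\<in>UNIV. ?d s * \<pi> t s a * p s a s')" by simp
  also have "\<dots> = (\<Sum>s\<in>UNIV. \<Sum>s'\<in>UNIV. \<Sum>a\<in>UNIV. ?d s * \<pi> t s a * p s a s')"
    by (rule sum.swap)
  also have "\<dots> = (\<Sum>s\<in>UNIV. \<Sum>a\<in>UNIV. \<Sum>s'\<in>UNIV. ?d s * \<pi> t s a * p s a s')"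
    by (rule sum.cong[OF refl], rule sum.swap)
  also have "\<dots> = (\<Sum>s\<in>UNIV. \<Sum>a\<in>UNIV. ?d s * \<pi> t s a)"
    by (simp add: sum_distrib_left[symmetric] p_sum)
  also have "\<dots> = (\<Sum>s\<in>UNIV. ?d s)"
    using mp by (simp add: sum_distrib_left[symmetric] markov_policy_def)
  finally show ?case using Suc by simp
qed

lemma sd_le1: assumes "markov_policy \<pi>" shows "state_dist p \<pi> s0 t s \<le> 1"
  using member_le_sum[of s UNIV "state_dist p \<pi> s0 t"] sd_nonneg[OF assms] sd_sum[OF assms] by auto

lemma sum_delta_mult: "(\<Sum>a\<in>(UNIV::'b::finite set). c * (if a = b then 1 else 0) * (f a::real)) = c * f b"
proof -
  have "(\<Sum>a\<in>(UNIV::'b set). c * (if a = b then 1 else 0) * f a) = (\<Sum>a\<in>UNIV. if a = b then c * f a else 0)"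
    by (rule sum.cong) auto
  also have "\<dots> = c * f b" by (simp add: sum.delta)
  finally show ?thesis .
qed

lemma swap3: "(\<Sum>s\<in>UNIV. \<Sum>a\<in>UNIV. \<Sum>s'\<in>UNIV. (X s a s' :: real)) = (\<Sum>s'\<in>UNIV. \<Sum>s\<in>UNIV. \<Sum>a\<in>UNIV. X s a s')"
proof -
  have "(\<Sum>s\<in>UNIV. \<Sum>a\<in>UNIV. \<Sum>s'\<in>UNIV. X s a s') = (\<Sum>s\<in>UNIV. \<Sum>s'\<in>UNIV. \<Sum>a\<in>UNIV. X s a s')"
    by (rule sum.cong[OF refl], rule sum.swap)
  also have "\<dots> = (\<Sum>s'\<in>UNIV. \<Sum>s\<in>UNIV. \<Sum>a\<in>UNIV. X s a s')" by (rule sum.swap)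
  finally show ?thesis .
qed

lemma exp_identity:
  assumes mp: "markov_policy \<pi>"
    and eq: "\<forall>s a. q $ (s, a) = r s a - \<rho> + (\<Sum>s'\<in>UNIV. p s a s' * (MAX a'. q $ (s', a')))"
  shows "exp_reward r p \<pi> s0 t = (\<Sum>s\<in>UNIV. \<Sum>a\<in>UNIV. state_dist p \<pi> s0 t s * \<pi> t s a * q $ (s, a)) + \<rho>
           - (\<Sum>s\<in>UNIV. state_dist p \<pi> s0 (Suc t) s * (MAX a'. q $ (s, a')))"
proof -
  let ?d = "state_dist p \<pi> s0 t"
  define hq where "hq s = (MAX a'. q $ (s, a'))" for s
  define P where "P s a = (\<Sum>s'\<in>UNIV. p s a s' * hq s')" for s a
  have r: "r s a = q $ (s, a) + \<rho> - P s a" for s a using eq[rule_format, of s a] unfolding P_def hq_def by simp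
  have "exp_reward r p \<pi> s0 t = (\<Sum>s\<in>UNIV. \<Sum>a\<in>UNIV. ?d s * \<pi> t s a * q $ (s, a) + ?d s * \<pi> t s a * \<rho> - ?d s * \<pi> t s a * P s a)"
    unfolding exp_reward_def r by (simp add: algebra_simps)
  also have "\<dots> = (\<Sum>s\<in>UNIV. \<Sum>a\<in>UNIV. ?d s * \<pi> t s a * q $ (s, a)) + (\<Sum>s\<in>UNIV. \<Sum>a\<in>UNIV. ?d s * \<pi> t s a * \<rho>)
       - (\<Sum>s\<in>UNIV. \<Sum>a\<in>UNIV. ?d s * \<pi> t s a * P s a)"
    by (simp add: sum.distrib sum_subtractf)
  also have "(\<Sum>s\<in>UNIV. \<Sum>a\<in>UNIV. ?d s * \<pi> t s a * \<rho>) = \<rho>"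
  proof -
    have "(\<Sum>s\<in>UNIV. \<Sum>a\<in>UNIV. ?d s * \<pi> t s a * \<rho>) = (\<Sum>s\<in>UNIV. ?d s * (\<Sum>a\<in>UNIV. \<pi> t s a)) * \<rho>"
      by (simp add: sum_distrib_left sum_distrib_right mult.assoc)
    also have "\<dots> = \<rho>" using mp sd_sum[OF mp] by (simp add: markov_policy_def)
    finally show ?thesis .
  qed
  also have "(\<Sum>s\<in>UNIV. \<Sum>a\<in>UNIV. ?d s * \<pi> t s a * P s a) = (\<Sum>s\<in>UNIV. state_dist p \<pi> s0 (Suc t) s * hq s)"
  proof -
    have "(\<Sum>s\<in>UNIV. \<Sum>a\<in>UNIV. ?d s * \<pi> t s a * P s a) = (\<Sum>s\<in>UNIV. \<Sum>a\<in>UNIV. \<Sum>s'\<in>UNIV. ?d s * \<pi> t s a * p s a s' * hq s')"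
      unfolding P_def by (simp add: sum_distrib_left mult.assoc)
    also have "\<dots> = (\<Sum>s'\<in>UNIV. \<Sum>s\<in>UNIV. \<Sum>a\<in>UNIV. ?d s * \<pi> t s a * p s a s' * hq s')" by (rule swap3)
    also have "\<dots> = (\<Sum>s'\<in>UNIV. state_dist p \<pi> s0 (Suc t) s' * hq s')"
      by (simp add: sum_distrib_right)
    finally show ?thesis .
  qed
  finally show ?thesis unfolding hq_def .
qed


lemma opt_avg_eq:
  assumes eq: "\<forall>s a. q $ (s, a) = r s a - \<rho> + (\<Sum>s'\<in>UNIV. p s a s' * (MAX a'. q $ (s', a')))"
  shows "opt_avg_reward r p s0 = \<rho>"
proof -
  define hq where "hq s = (MAX a'. q $ (s, a'))" for s
  define H where "H \<pi> t = (\<Sum>s\<in>UNIV. state_dist p \<pi> s0 t s * hq s)" for \<pi> t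
  define Hm where "Hm = (\<Sum>s\<in>(UNIV::'s set). \<bar>hq s\<bar>)"
  have Hb: "\<bar>H \<pi> t\<bar> \<le> Hm" if mp: "markov_policy \<pi>" for \<pi> t
  proof -
    have "\<bar>H \<pi> t\<bar> \<le> (\<Sum>s\<in>UNIV. \<bar>state_dist p \<pi> s0 t s * hq s\<bar>)" unfolding H_def by (rule sum_abs)
    also have "\<dots> \<le> Hm" unfolding Hm_def
      by (intro sum_mono) (simp add: abs_mult sd_nonneg[OF mp] sd_le1[OF mp] mult_left_le_one_le)
    finally show ?thesis .
  qed
  have qle: "q $ (s, a) \<le> hq s" for s a unfolding hq_def by (rule Max_fin_ge)
  have upper: "exp_reward r p \<pi> s0 t \<le> \<rho> + H \<pi> t - H \<pi> (Suc t)" if mp: "markov_policy \<pi>" for \<pi> t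
  proof -
    have "(\<Sum>s\<in>UNIV. \<Sum>a\<in>UNIV. state_dist p \<pi> s0 t s * \<pi> t s a * q $ (s, a))
        \<le> (\<Sum>s\<in>UNIV. \<Sum>a\<in>UNIV. state_dist p \<pi> s0 t s * \<pi> t s a * hq s)"
      using mp by (intro sum_mono mult_left_mono qle) (auto simp: markov_policy_def sd_nonneg)
    also have "\<dots> = H \<pi> t"
      using mp unfolding H_def by (simp add: sum_distrib_right[symmetric] sum_distrib_left[symmetric] markov_policy_def mult.assoc)
    finally show ?thesis using exp_identity[OF mp eq, of s0 t] unfolding H_def hq_def by linarith
  qed
  have lim_upper: "L \<le> \<rho>" if mp: "markov_policy \<pi>" and lim: "avg_reward r p \<pi> s0 \<longlonglongrightarrow> L" for \<pi> L
  proof -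
    have S: "(\<Sum>t\<le>T. exp_reward r p \<pi> s0 t) \<le> real (Suc T) * \<rho> + 2 * Hm" for T
    proof -
      have "(\<Sum>t\<le>T. exp_reward r p \<pi> s0 t) \<le> (\<Sum>t\<le>T. \<rho> + (H \<pi> t - H \<pi> (Suc t)))"
        using upper[OF mp] by (intro sum_mono) (simp add: algebra_simps)
      also have "\<dots> = real (Suc T) * \<rho> + (H \<pi> 0 - H \<pi> (Suc T))"
        by (simp add: sum.distrib sum_telescope)
      finally show ?thesis using Hb[OF mp, of 0] Hb[OF mp, of "Suc T"] by linarith
    qed
    have U: "(\<lambda>T. (real (Suc T) * \<rho> + 2 * Hm) / real T) \<longlonglongrightarrow> \<rho>" by real_asymp
    show ?thesis
    proof (rule LIMSEQ_le[OF lim U], intro exI allI impI)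
      fix T :: nat assume "1 \<le> T"
      then show "avg_reward r p \<pi> s0 T \<le> (real (Suc T) * \<rho> + 2 * Hm) / real T"
        unfolding avg_reward_def using S[of T] by (intro divide_right_mono) auto
    qed
  qed
  define g where "g s = (SOME a. \<forall>a'. q $ (s, a') \<le> q $ (s, a))" for s
  have g: "q $ (s, a') \<le> q $ (s, g s)" for s a'
    using someI_ex[OF ex_max_fin[of "\<lambda>a. q $ (s, a)"]] unfolding g_def by blast
  have hg: "hq s = q $ (s, g s)" for s
    unfolding hq_def by (intro antisym) (auto simp: g Max_fin_le_iff intro: Max_fin_ge)
  define \<pi>g where "\<pi>g (t::nat) s a = (if a = g s then 1 else 0 :: real)" for t s a
  have mpg: "markov_policy \<pi>g" unfolding markov_policy_def \<pi>g_def by auto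
  have greedy: "exp_reward r p \<pi>g s0 t = \<rho> + H \<pi>g t - H \<pi>g (Suc t)" for t
  proof -
    have "(\<Sum>s\<in>UNIV. \<Sum>a\<in>UNIV. state_dist p \<pi>g s0 t s * \<pi>g t s a * q $ (s, a)) = H \<pi>g t"
      unfolding H_def hg unfolding \<pi>g_def by (simp only: sum_delta_mult)
    then show ?thesis using exp_identity[OF mpg eq, of s0 t] unfolding H_def hq_def by linarith
  qed
  have Sg: "(\<Sum>t\<le>T. exp_reward r p \<pi>g s0 t) = real (Suc T) * \<rho> + (H \<pi>g 0 - H \<pi>g (Suc T))" for T
  proof -
    have "(\<Sum>t\<le>T. exp_reward r p \<pi>g s0 t) = (\<Sum>t\<le>T. \<rho> + (H \<pi>g t - H \<pi>g (Suc t)))"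
      using greedy by (intro sum.cong) (simp_all add: algebra_simps)
    also have "\<dots> = real (Suc T) * \<rho> + (H \<pi>g 0 - H \<pi>g (Suc T))"
      by (simp add: sum.distrib sum_telescope)
    finally show ?thesis .
  qed
  have glim: "avg_reward r p \<pi>g s0 \<longlonglongrightarrow> \<rho>"
  proof (rule tendsto_sandwich)
    show "(\<lambda>T. (real (Suc T) * \<rho> - 2 * Hm) / real T) \<longlonglongrightarrow> \<rho>" by real_asymp
    show "(\<lambda>T. (real (Suc T) * \<rho> + 2 * Hm) / real T) \<longlonglongrightarrow> \<rho>" by real_asymp
    show "\<forall>\<^sub>F T in sequentially. (real (Suc T) * \<rho> - 2 * Hm) / real T \<le> avg_reward r p \<pi>g s0 T"
      unfolding eventually_sequentially
    proof (intro exI allI impI)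
      fix T :: nat assume "1 \<le> T"
      then show "(real (Suc T) * \<rho> - 2 * Hm) / real T \<le> avg_reward r p \<pi>g s0 T"
        unfolding avg_reward_def Sg using Hb[OF mpg, of 0] Hb[OF mpg, of "Suc T"]
        by (intro divide_right_mono) auto
    qed
    show "\<forall>\<^sub>F T in sequentially. avg_reward r p \<pi>g s0 T \<le> (real (Suc T) * \<rho> + 2 * Hm) / real T"
      unfolding eventually_sequentially
    proof (intro exI allI impI)
      fix T :: nat assume "1 \<le> T"
      then show "avg_reward r p \<pi>g s0 T \<le> (real (Suc T) * \<rho> + 2 * Hm) / real T"
        unfolding avg_reward_def Sg using Hb[OF mpg, of 0] Hb[OF mpg, of "Suc T"]
        by (intro divide_right_mono) auto
    qed
  qed
  show ?thesis unfolding opt_avg_reward_def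
    by (rule cSup_eq_maximum) (use mpg glim lim_upper in blast)+
qed

lemma rho_bound:
  assumes eq: "\<forall>s a. q $ (s, a) = r s a - \<rho> + (\<Sum>s'\<in>UNIV. p s a s' * (MAX a'. q $ (s', a')))"
  shows "\<bar>\<rho>\<bar> \<le> rnorm r"
proof -
  define hq where "hq s = (MAX a'. q $ (s, a'))" for s
  obtain smax where smax: "\<And>s. hq s \<le> hq smax" using ex_max_fin[of hq] by blast
  obtain smin where smin: "\<And>s. hq smin \<le> hq s" using ex_min_fin[of hq] by blast
  obtain a1 where a1: "hq smax = q $ (smax, a1)" using Max_fin_ex unfolding hq_def by blast
  have P1: "(\<Sum>s'\<in>UNIV. p smax a1 s' * hq s') \<le> hq smax"
  proof -
    have "(\<Sum>s'\<in>UNIV. p smax a1 s' * hq s') \<le> (\<Sum>s'\<in>UNIV. p smax a1 s' * hq smax)"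
      by (intro sum_mono mult_left_mono smax p_nonneg)
    then show ?thesis by (simp add: p_sum_const)
  qed
  have "\<rho> \<le> r smax a1" using eq[rule_format, of smax a1] a1 P1 unfolding hq_def by linarith
  then have up: "\<rho> \<le> rnorm r" using r_bound[of smax a1] by linarith
  have P2: "hq smin \<le> (\<Sum>s'\<in>UNIV. p smin undefined s' * hq s')"
  proof -
    have "(\<Sum>s'\<in>UNIV. p smin undefined s' * hq smin) \<le> (\<Sum>s'\<in>UNIV. p smin undefined s' * hq s')"
      by (intro sum_mono mult_left_mono smin p_nonneg)
    then show ?thesis by (simp add: p_sum_const)
  qed
  have "q $ (smin, undefined) \<le> hq smin" unfolding hq_def by (rule Max_fin_ge)
  then have "r smin undefined \<le> \<rho>" using eq[rule_format, of smin undefined] P2 unfolding hq_def by linarith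
  then have "- rnorm r \<le> \<rho>" using r_bound[of smin undefined] by linarith
  then show ?thesis using up by linarith
qed

end

lemma Max_neg_fin: "(MAX k. - (f k::real)) = - (MIN k. (f::'a::finite\<Rightarrow>real) k)"
proof (rule antisym)
  have "\<And>k. (MIN k. f k) \<le> f k" by (rule Min_le) auto
  then show "(MAX k. - f k) \<le> - (MIN k. f k)" by (simp add: Max_fin_le_iff)
  have "(MIN k. f k) \<in> range f" by (rule Min_in) auto
  then obtain k0 where "(MIN k. f k) = f k0" by blast
  then show "- (MIN k. f k) \<le> (MAX k. - f k)" using Max_fin_ge[of "\<lambda>k. - f k" k0] by simp
qed


lemma closed_level_le:
  fixes g h :: "real \<Rightarrow> real"
  assumes "continuous_on {a..b} g" "continuous_on {a..b} h"
  shows "closed {t\<in>{a..b}. g t \<le> h t}"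
proof -
  have "closed ({a..b} \<inter> (\<lambda>t. h t - g t) -` {0..})"
    by (rule continuous_closed_preimage) (auto intro!: continuous_intros assms)
  moreover have "{t\<in>{a..b}. g t \<le> h t} = {a..b} \<inter> (\<lambda>t. h t - g t) -` {0..}" by auto
  ultimately show ?thesis by simp
qed

lemma ifactor:
  fixes \<phi> D :: "real \<Rightarrow> real"
  assumes ab: "a \<le> b" and cont: "continuous_on {a..b} \<phi>"
    and der: "\<And>t. a < t \<Longrightarrow> t < b \<Longrightarrow> (\<phi> has_real_derivative D t) (at t)"
    and ineq: "\<And>t. a < t \<Longrightarrow> t < b \<Longrightarrow> \<beta> - \<phi> t \<le> D t"
  shows "\<beta> + (\<phi> a - \<beta>) * exp (-(b - a)) \<le> \<phi> b"
proof -
  define \<psi> where "\<psi> t = exp t * (\<phi> t - \<beta>)" for t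
  have "\<psi> a \<le> \<psi> b"
  proof (rule DERIV_nonneg_imp_increasing_open[OF ab])
    fix t assume t: "a < t" "t < b"
    have "(\<psi> has_real_derivative (exp t * (\<phi> t - \<beta>) + exp t * D t)) (at t)"
      unfolding \<psi>_def by (auto intro!: derivative_eq_intros der t)
    moreover have "0 \<le> exp t * (\<phi> t - \<beta>) + exp t * D t"
    proof -
      have "0 \<le> exp t * (\<phi> t - \<beta> + D t)" using ineq[OF t] by simp
      then show ?thesis by (simp add: algebra_simps)
    qed
    ultimately show "\<exists>y. (\<psi> has_real_derivative y) (at t) \<and> 0 \<le> y" by blast
  next
    show "continuous_on {a..b} \<psi>" unfolding \<psi>_def by (intro continuous_intros cont)
  qed
  then have "exp a * (\<phi> a - \<beta>) \<le> exp b * (\<phi> b - \<beta>)" unfolding \<psi>_def .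
  then have "exp a * (\<phi> a - \<beta>) / exp b \<le> \<phi> b - \<beta>" by (simp add: divide_le_eq mult.commute)
  moreover have "exp a * (\<phi> a - \<beta>) / exp b = (\<phi> a - \<beta>) * exp (-(b - a))"
    by (simp add: exp_diff exp_minus field_simps)
  ultimately show ?thesis by linarith
qed

lemma max_noninc:
  fixes y :: "real \<Rightarrow> real^'n"
  assumes cont: "\<And>j. continuous_on {t0..} (\<lambda>t. y t $ j)"
    and der: "\<And>j t. t0 < t \<Longrightarrow> ((\<lambda>t. y t $ j) has_real_derivative D j t) (at t)"
    and bd: "\<And>j t. t0 < t \<Longrightarrow> D j t \<le> (MAX k. y t $ k) - y t $ j"
    and t01: "t0 \<le> t1"
  shows "y t1 $ j \<le> (MAX k. y t0 $ k)"
proof -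
  define c where "c = (MAX k. y t0 $ k)"
  have strict: "y t1 $ j < c + \<epsilon> * (t1 - t0 + 1)" if e: "0 < \<epsilon>" for \<epsilon> j
  proof (rule ccontr)
    assume nt: "\<not> y t1 $ j < c + \<epsilon> * (t1 - t0 + 1)"
    define B where "B t = c + \<epsilon> * (t - t0 + 1)" for t
    have cB: "continuous_on {t0..t1} B" unfolding B_def by (intro continuous_intros)
    have cy: "continuous_on {t0..t1} (\<lambda>t. y t $ k)" for k
      by (rule continuous_on_subset[OF cont]) auto
    define S where "S = {t\<in>{t0..t1}. \<exists>j. B t \<le> y t $ j}"
    have Seq: "S = (\<Union>j\<in>UNIV. {t\<in>{t0..t1}. B t \<le> y t $ j})" unfolding S_def by auto
    have clS: "closed S" unfolding Seq by (intro closed_UN ballI closed_level_le cB cy) auto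
    have t1S: "t1 \<in> S"
    proof -
      have "B t1 \<le> y t1 $ j" unfolding B_def using nt by simp
      then show ?thesis unfolding S_def using t01 by auto
    qed
    have bbS: "bdd_below S" unfolding S_def by (auto intro: bdd_belowI[of _ t0])
    define ts where "ts = Inf S"
    have tsS: "ts \<in> S" unfolding ts_def using closed_contains_Inf[OF _ bbS clS] t1S by blast
    then have ts: "t0 \<le> ts" "ts \<le> t1" unfolding S_def by auto
    have before: "y t $ k < B t" if "t0 \<le> t" "t < ts" for t k
    proof (rule ccontr)
      assume "\<not> ?thesis"
      then have "B t \<le> y t $ k" by simp
      then have "t \<in> S"
        unfolding S_def using that ts by auto
      then have "ts \<le> t" unfolding ts_def by (rule cInf_lower[OF _ bbS])
      then show False using that by simp
    qed
    have c0: "y t0 $ k \<le> c" for k unfolding c_def by (rule Max_fin_ge)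
    have ts0: "t0 < ts"
    proof (rule ccontr)
      assume "\<not> ?thesis"
      then have "ts = t0" using ts by simp
      then obtain k where "B t0 \<le> y t0 $ k" using tsS unfolding S_def by auto
      moreover have "B t0 = c + \<epsilon>" unfolding B_def by simp
      ultimately show False using c0[of k] e by simp
    qed
    have atts: "y ts $ k \<le> B ts" for k
    proof -
      have "{t0..<ts} \<subseteq> {t\<in>{t0..t1}. y t $ k \<le> B t}" using before ts by (auto intro: less_imp_le)
      then have "closure {t0..<ts} \<subseteq> {t\<in>{t0..t1}. y t $ k \<le> B t}"
        by (intro closure_minimal closed_level_le cB cy)
      moreover have "ts \<in> closure {t0..<ts}" using ts0 by simp
      ultimately show ?thesis by blast
    qed
    obtain j where j: "B ts \<le> y ts $ j" using tsS unfolding S_def by auto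
    have eqj: "y ts $ j = B ts" using j atts[of j] by simp
    have mx: "(MAX k. y ts $ k) \<le> B ts" using atts by (simp add: Max_fin_le_iff)
    have Dj: "D j ts \<le> 0" using bd[OF ts0, of j] mx eqj by linarith
    have derphi: "((\<lambda>t. y t $ j - B t) has_real_derivative (D j ts - \<epsilon>)) (at ts)"
      unfolding B_def by (auto intro!: derivative_eq_intros der[OF ts0])
    obtain d where d: "d > 0" "\<And>h. h > 0 \<Longrightarrow> h < d \<Longrightarrow> y ts $ j - B ts < y (ts - h) $ j - B (ts - h)"
      using DERIV_neg_dec_left[OF derphi] Dj e by force
    define h where "h = min d (ts - t0) / 2"
    have h: "h > 0" "h < d" "t0 \<le> ts - h" "ts - h < ts" unfolding h_def using d(1) ts0 by (auto simp: min_def field_simps)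
    have "y (ts - h) $ j < B (ts - h)" using before h by auto
    then show False using d(2)[OF h(1,2)] eqj by simp
  qed
  show ?thesis
  proof (rule ccontr)
    assume "\<not> ?thesis"
    then have gt: "c < y t1 $ j" unfolding c_def by linarith
    define \<epsilon> where "\<epsilon> = (y t1 $ j - c) / (2 * (t1 - t0 + 1))"
    have e: "0 < \<epsilon>" unfolding \<epsilon>_def using gt t01 by auto
    have ee: "\<epsilon> * (t1 - t0 + 1) = (y t1 $ j - c) / 2" unfolding \<epsilon>_def using t01 by (simp add: field_simps)
    have "y t1 $ j < c + (y t1 $ j - c) / 2" using strict[OF e, of j] unfolding ee .
    then show False using gt by (simp add: field_simps)
  qed
qed

lemma min_nondec:
  fixes y :: "real \<Rightarrow> real^'n"
  assumes cont: "\<And>j. continuous_on {t0..} (\<lambda>t. y t $ j)"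
    and der: "\<And>j t. t0 < t \<Longrightarrow> ((\<lambda>t. y t $ j) has_real_derivative D j t) (at t)"
    and bd: "\<And>j t. t0 < t \<Longrightarrow> (MIN k. y t $ k) - y t $ j \<le> D j t"
    and t01: "t0 \<le> t1"
  shows "(MIN k. y t0 $ k) \<le> y t1 $ j"
proof -
  define z where "z t = - y t" for t
  have "z t1 $ j \<le> (MAX k. z t0 $ k)"
  proof (rule max_noninc[where D="\<lambda>j t. - D j t"])
    show "continuous_on {t0..} (\<lambda>t. z t $ j)" for j unfolding z_def using cont[of j]
      by (simp add: continuous_on_minus)
    show "((\<lambda>t. z t $ j) has_real_derivative - D j t) (at t)" if "t0 < t" for j t
      unfolding z_def using der[OF that, of j] by (auto intro!: derivative_eq_intros)
    show "- D j t \<le> (MAX k. z t $ k) - z t $ j" if "t0 < t" for j t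
    proof -
      have mz: "(MAX k. z t $ k) = - (MIN k. y t $ k)" unfolding z_def vector_uminus_component by (rule Max_neg_fin)
      show ?thesis unfolding mz unfolding z_def vector_uminus_component using bd[OF that, of j] by linarith
    qed
  qed (rule t01)
  moreover have "(MAX k. z t0 $ k) = - (MIN k. y t0 $ k)" unfolding z_def vector_uminus_component by (rule Max_neg_fin)
  ultimately show ?thesis unfolding z_def vector_uminus_component by linarith
qed

lemma stay_below:
  fixes g D :: "real \<Rightarrow> real"
  assumes cont: "continuous_on {t1..} g"
    and der: "\<And>t. t1 < t \<Longrightarrow> (g has_real_derivative D t) (at t)"
    and neg: "\<And>t. t1 < t \<Longrightarrow> \<beta> < g t \<Longrightarrow> D t \<le> 0"
    and start: "g t1 \<le> \<beta>" and tt: "t1 \<le> t"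
  shows "g t \<le> \<beta>"
proof (rule ccontr)
  assume gt: "\<not> g t \<le> \<beta>"
  define S where "S = {s\<in>{t1..t}. g s \<le> (\<lambda>_. \<beta>) s}"
  have cg: "continuous_on {t1..t} g" by (rule continuous_on_subset[OF cont]) auto
  have clS: "closed S" unfolding S_def by (intro closed_level_le cg continuous_intros)
  have neS: "S \<noteq> {}" using start tt unfolding S_def by auto
  have bS: "bdd_above S" unfolding S_def by (auto intro: bdd_aboveI[of _ t])
  define ts where "ts = Sup S"
  have tsS: "ts \<in> S" unfolding ts_def by (rule closed_contains_Sup[OF neS bS clS])
  then have ts: "t1 \<le> ts" "ts \<le> t" "g ts \<le> \<beta>" unfolding S_def by auto
  have after: "\<beta> < g s" if "ts < s" "s \<le> t" for s
  proof (rule ccontr)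
    assume "\<not> \<beta> < g s"
    then have "s \<in> S" unfolding S_def using that ts by auto
    then have "s \<le> ts" unfolding ts_def by (rule cSup_upper[OF _ bS])
    then show False using that by simp
  qed
  have "ts \<noteq> t" using ts(3) gt by auto
  then have tst: "ts < t" using ts by simp
  have "g t \<le> g ts"
  proof (rule DERIV_nonpos_imp_decreasing_open[OF less_imp_le[OF tst]])
    fix x assume x: "ts < x" "x < t"
    then have "t1 < x" using ts by simp
    then show "\<exists>y. (g has_real_derivative y) (at x) \<and> y \<le> 0"
      using der neg after[of x] x by auto
  next
    show "continuous_on {ts..t} g" by (rule continuous_on_subset[OF cont]) (use ts in auto)
  qed
  then show False using ts(3) gt by simp
qed

lemma eventually_below:
  fixes g D :: "real \<Rightarrow> real"
  assumes cont: "continuous_on {T0..} g"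
    and der: "\<And>t. T0 < t \<Longrightarrow> (g has_real_derivative D t) (at t)"
    and dec: "\<And>t. T0 < t \<Longrightarrow> \<beta> \<le> g t \<Longrightarrow> D t \<le> - \<kappa>"
    and k: "0 < \<kappa>"
  shows "\<exists>t1\<ge>T0. g t1 \<le> \<beta>"
proof (rule ccontr)
  assume "\<not> ?thesis"
  then have above: "\<beta> < g t" if "T0 \<le> t" for t using that by force
  define T where "T = T0 + (g T0 - \<beta>) / \<kappa> + 1"
  have TT: "T0 \<le> T" unfolding T_def using above[of T0] k by (simp add: field_simps)
  have "g T + \<kappa> * T \<le> g T0 + \<kappa> * T0"
  proof (rule DERIV_nonpos_imp_decreasing_open[OF TT, where f="\<lambda>t. g t + \<kappa> * t"])
    fix x assume x: "T0 < x" "x < T"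
    have "((\<lambda>t. g t + \<kappa> * t) has_real_derivative D x + \<kappa>) (at x)"
      by (auto intro!: derivative_eq_intros der x)
    moreover have "D x + \<kappa> \<le> 0" using dec[OF x(1)] above[of x] x by auto
    ultimately show "\<exists>y. ((\<lambda>t. g t + \<kappa> * t) has_real_derivative y) (at x) \<and> y \<le> 0" by blast
  next
    show "continuous_on {T0..T} (\<lambda>t. g t + \<kappa> * t)"
      by (intro continuous_intros continuous_on_subset[OF cont]) auto
  qed
  moreover have "\<kappa> * (T - T0) = g T0 - \<beta> + \<kappa>" unfolding T_def using k by (simp add: field_simps)
  ultimately have "g T \<le> \<beta> - \<kappa>" by (simp add: algebra_simps)
  then show False using above[OF TT] k by simp
qed

lemma integral_deriv_within:
  fixes c :: "real \<Rightarrow> real"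
  assumes cc: "continuous_on {0..} c" and t: "0 \<le> t"
  shows "((\<lambda>u. integral {0..u} c) has_real_derivative c t) (at t within {0..})"
proof -
  have "((\<lambda>u. integral {0..u} c) has_vector_derivative c t) (at t within {0..t+1})"
    by (rule integral_has_vector_derivative) (use t in \<open>auto intro: continuous_on_subset[OF cc]\<close>)
  moreover have "at t within {0..t+1} = at t within {0..}"
    by (rule at_within_nhd[where S="{t - 1 <..< t + 1}"]) auto
  ultimately show ?thesis by (simp add: has_real_derivative_iff_has_vector_derivative)
qed

lemma within_to_at:
  fixes g :: "real \<Rightarrow> 'b::real_normed_vector"
  assumes "(g has_vector_derivative d) (at t within {0..})" "0 < t"
  shows "(g has_vector_derivative d) (at t)"
proof -
  have "t \<in> interior {0..}" using assms(2) by simp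
  then show ?thesis using assms(1) at_within_interior by metis
qed

locale mdpq = mdpl r p
  for r :: "'s::finite \<Rightarrow> 'a::finite \<Rightarrow> real" and p :: "'s \<Rightarrow> 'a \<Rightarrow> 's \<Rightarrow> real" +
  fixes q :: "real^('s \<times> 'a)" and \<rho> :: real
  assumes eq: "\<forall>s a. q $ (s, a) = r s a - \<rho> + (\<Sum>s'\<in>UNIV. p s a s' * (MAX a'. q $ (s', a')))"
begin

definition hq where "hq s = (MAX a'. q $ (s, a'))"
definition gap where "gap s b = hq s - q $ (s, b)"
definition Vd :: "real^('s \<times> 'a) \<Rightarrow> 's \<Rightarrow> real" where "Vd y s = (MAX b. y $ (s, b) - gap s b)"
definition Tt :: "real^('s \<times> 'a) \<Rightarrow> real^('s \<times> 'a)" where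
  "Tt y = (\<chi> i. \<Sum>s'\<in>UNIV. p (fst i) (snd i) s' * Vd y s')"

lemma gap_nonneg: "0 \<le> gap s b" unfolding gap_def hq_def using Max_fin_ge[of "\<lambda>a. q $ (s, a)" b] by simp

lemma gap_zero_ex: "\<exists>b. gap s b = 0"
  using Max_fin_ex[of "\<lambda>a. q $ (s, a)"] unfolding gap_def hq_def by auto

lemma Vd_ge: "y $ (s, b) - gap s b \<le> Vd y s" unfolding Vd_def by (rule Max_fin_ge)
lemma Vd_le: "(\<And>a. y $ (s, a) \<le> c) \<Longrightarrow> Vd y s \<le> c"
  unfolding Vd_def Max_fin_le_iff using gap_nonneg by (smt (verit))
lemma Vd_ex: "\<exists>b. Vd y s = y $ (s, b) - gap s b" unfolding Vd_def by (rule Max_fin_ex)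
lemma Vd_ge_all: "(\<And>a. c \<le> y $ (s, a)) \<Longrightarrow> c \<le> Vd y s"
proof -
  assume h: "\<And>a. c \<le> y $ (s, a)"
  obtain b where "gap s b = 0" using gap_zero_ex by blast
  then show ?thesis using Vd_ge[of y s b] h[of b] by simp
qed

lemma Tt_comp: "Tt y $ (s, a) = (\<Sum>s'\<in>UNIV. p s a s' * Vd y s')" unfolding Tt_def by simp

lemma Tt_le: "(\<And>s'. Vd y s' \<le> c) \<Longrightarrow> Tt y $ i \<le> c"
proof -
  assume h: "\<And>s'. Vd y s' \<le> c"
  obtain s a where i: "i = (s, a)" by (cases i)
  have "(\<Sum>s'\<in>UNIV. p s a s' * Vd y s') \<le> (\<Sum>s'\<in>UNIV. p s a s' * c)"
    by (intro sum_mono mult_left_mono h p_nonneg)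
  then show ?thesis unfolding i Tt_comp p_sum_const .
qed

lemma Tt_ge: "(\<And>s'. c \<le> Vd y s') \<Longrightarrow> c \<le> Tt y $ i"
proof -
  assume h: "\<And>s'. c \<le> Vd y s'"
  obtain s a where i: "i = (s, a)" by (cases i)
  have "(\<Sum>s'\<in>UNIV. p s a s' * c) \<le> (\<Sum>s'\<in>UNIV. p s a s' * Vd y s')"
    by (intro sum_mono mult_left_mono h p_nonneg)
  then show ?thesis unfolding i Tt_comp p_sum_const .
qed

lemma Tt_le_max: "Tt y $ i \<le> (MAX k. y $ k)"
  by (intro Tt_le Vd_le Max_fin_ge)

lemma Tt_ge_min: "(MIN k. y $ k) \<le> Tt y $ i"
  by (intro Tt_ge Vd_ge_all Min_le) auto

lemma Tbell_shift: "Tbell r p (x + c *\<^sub>R allones) = Tbell r p x + c *\<^sub>R allones"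
proof -
  have "(MAX a'. x $ (s', a') + c) = (MAX a'. x $ (s', a')) + c" for s' by (rule Max_fin_add)
  then show ?thesis
    unfolding Tbell_def allones_def
    by (simp add: vec_eq_iff algebra_simps sum.distrib sum_distrib_right[symmetric] sum_distrib_left[symmetric] p_sum)
qed

lemma Tbell_q: "Tbell r p q = q + \<rho> *\<^sub>R allones"
proof (rule vec_eq_iff[THEN iffD2], intro allI)
  fix i :: "'s \<times> 'a"
  obtain s a where i: "i = (s, a)" by (cases i)
  show "Tbell r p q $ i = (q + \<rho> *\<^sub>R allones) $ i"
    unfolding i Tbell_def allones_def using eq[rule_format, of s a] by simp
qed

lemma Tbell_diff: "Tbell r p (q + y) - Tbell r p q = Tt y"
proof -
  have m: "(MAX a'. (q + y) $ (s', a')) - hq s' = Vd y s'" for s'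
  proof -
    have "(MAX a'. (q + y) $ (s', a')) = (MAX a'. (y $ (s', a') - gap s' a') + hq s')"
      unfolding gap_def by (simp add: add.commute)
    also have "\<dots> = Vd y s' + hq s'" unfolding Vd_def by (rule Max_fin_add)
    finally show ?thesis by simp
  qed
  show ?thesis
    unfolding Tbell_def Tt_def vec_eq_iff
    by (simp add: m[symmetric] hq_def right_diff_distrib sum_subtractf)
qed

end

locale ysol = mdpq r p q \<rho>
  for r :: "'s::finite \<Rightarrow> 'a::finite \<Rightarrow> real" and p :: "'s \<Rightarrow> 'a \<Rightarrow> 's \<Rightarrow> real"
    and q :: "real^('s \<times> 'a)" and \<rho> :: real +
  fixes y :: "real \<Rightarrow> real^('s \<times> 'a)"
  assumes ysol: "\<And>t. 0 \<le> t \<Longrightarrow> (y has_vector_derivative (Tt (y t) - y t)) (at t within {0..})"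
begin

lemma yder_within: "0 \<le> t \<Longrightarrow> ((\<lambda>t. y t $ j) has_real_derivative (Tt (y t) $ j - y t $ j)) (at t within {0..})"
  using bounded_linear.has_vector_derivative[OF bounded_linear_vec_nth ysol, of t j]
  by (simp add: has_real_derivative_iff_has_vector_derivative)

lemma yder: "0 < t \<Longrightarrow> ((\<lambda>t. y t $ j) has_real_derivative (Tt (y t) $ j - y t $ j)) (at t)"
  using within_to_at[of "\<lambda>t. y t $ j"] yder_within[of t j]
  by (simp add: has_real_derivative_iff_has_vector_derivative)

lemma ycont0: "continuous_on {0..} (\<lambda>t. y t $ j)"
  unfolding continuous_on_eq_continuous_within
  using yder_within DERIV_continuous by fastforce

lemma ycont: "0 \<le> a \<Longrightarrow> continuous_on {a..} (\<lambda>t. y t $ j)"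
  by (rule continuous_on_subset[OF ycont0]) auto

lemma ycont_vec: "continuous_on {0..} y"
  unfolding continuous_on_eq_continuous_within
  using ysol has_vector_derivative_continuous by fastforce

lemma ymax: "0 \<le> t0 \<Longrightarrow> t0 \<le> t \<Longrightarrow> y t $ j \<le> (MAX k. y t0 $ k)"
  by (rule max_noninc[where D="\<lambda>j t. Tt (y t) $ j - y t $ j"])
     (auto intro: ycont yder Tt_le_max)

lemma ymin: "0 \<le> t0 \<Longrightarrow> t0 \<le> t \<Longrightarrow> (MIN k. y t0 $ k) \<le> y t $ j"
  by (rule min_nondec[where D="\<lambda>j t. Tt (y t) $ j - y t $ j"])
     (auto intro: ycont yder Tt_ge_min)

lemma Ttmax: "0 \<le> t0 \<Longrightarrow> t0 \<le> t \<Longrightarrow> Tt (y t) $ i \<le> (MAX k. y t0 $ k)"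
  using Tt_le_max[of "y t" i] ymax[of t0 t] by (meson Max_fin_le_iff order_trans)

lemma Ttmin: "0 \<le> t0 \<Longrightarrow> t0 \<le> t \<Longrightarrow> (MIN k. y t0 $ k) \<le> Tt (y t) $ i"
proof -
  assume a: "0 \<le> t0" "t0 \<le> t"
  have "(MIN k. y t0 $ k) \<le> (MIN k. y t $ k)"
    using ymin[OF a] by (simp add: Min_ge_iff)
  then show ?thesis using Tt_ge_min[of "y t" i] by linarith
qed

lemma decay_up:
  assumes "0 \<le> t0" "t0 \<le> t1" "t1 \<le> t"
  shows "((MAX k. y t0 $ k) - y t1 $ i) * exp (-(t - t1)) \<le> (MAX k. y t0 $ k) - y t $ i"
proof -
  have "0 + (((MAX k. y t0 $ k) - y t1 $ i) - 0) * exp (-(t - t1)) \<le> (MAX k. y t0 $ k) - y t $ i"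
  proof (rule ifactor[where D="\<lambda>t. - (Tt (y t) $ i - y t $ i)"])
    show "continuous_on {t1..t} (\<lambda>t. (MAX k. y t0 $ k) - y t $ i)"
      by (intro continuous_intros continuous_on_subset[OF ycont0]) (use assms in auto)
    show "((\<lambda>t. (MAX k. y t0 $ k) - y t $ i) has_real_derivative - (Tt (y t') $ i - y t' $ i)) (at t')"
      if "t1 < t'" "t' < t" for t'
      using that assms by (auto intro!: derivative_eq_intros yder)
    show "0 - ((MAX k. y t0 $ k) - y t' $ i) \<le> - (Tt (y t') $ i - y t' $ i)" if "t1 < t'" "t' < t" for t'
      using Ttmax[of t0 t' i] that assms by linarith
  qed (use assms in auto)
  then show ?thesis by simp
qed

lemma decay_low:
  assumes "0 \<le> t0" "t0 \<le> t1" "t1 \<le> t"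
  shows "(y t1 $ i - (MIN k. y t0 $ k)) * exp (-(t - t1)) \<le> y t $ i - (MIN k. y t0 $ k)"
proof -
  have "0 + ((y t1 $ i - (MIN k. y t0 $ k)) - 0) * exp (-(t - t1)) \<le> y t $ i - (MIN k. y t0 $ k)"
  proof (rule ifactor[where D="\<lambda>t. Tt (y t) $ i - y t $ i"])
    show "continuous_on {t1..t} (\<lambda>t. y t $ i - (MIN k. y t0 $ k))"
      by (intro continuous_intros continuous_on_subset[OF ycont0]) (use assms in auto)
    show "((\<lambda>t. y t $ i - (MIN k. y t0 $ k)) has_real_derivative (Tt (y t') $ i - y t' $ i)) (at t')"
      if "t1 < t'" "t' < t" for t'
      using that assms by (auto intro!: derivative_eq_intros yder)
    show "0 - (y t' $ i - (MIN k. y t0 $ k)) \<le> Tt (y t') $ i - y t' $ i" if "t1 < t'" "t' < t" for t'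
      using Ttmin[of t0 t' i] that assms by linarith
  qed (use assms in auto)
  then show ?thesis by simp
qed

lemma lift_up:
  assumes "0 \<le> t0" "t0 \<le> a" "a \<le> b"
    and h: "\<And>t. a < t \<Longrightarrow> t < b \<Longrightarrow> \<gamma> \<le> (MAX k. y t0 $ k) - Tt (y t) $ i"
  shows "\<gamma> * (1 - exp (-(b - a))) \<le> (MAX k. y t0 $ k) - y b $ i"
proof -
  have "\<gamma> + (((MAX k. y t0 $ k) - y a $ i) - \<gamma>) * exp (-(b - a)) \<le> (MAX k. y t0 $ k) - y b $ i"
  proof (rule ifactor[where D="\<lambda>t. - (Tt (y t) $ i - y t $ i)"])
    show "continuous_on {a..b} (\<lambda>t. (MAX k. y t0 $ k) - y t $ i)"
      by (intro continuous_intros continuous_on_subset[OF ycont0]) (use assms in auto)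
    show "((\<lambda>t. (MAX k. y t0 $ k) - y t $ i) has_real_derivative - (Tt (y t') $ i - y t' $ i)) (at t')"
      if "a < t'" "t' < b" for t'
      using that assms by (auto intro!: derivative_eq_intros yder)
    show "\<gamma> - ((MAX k. y t0 $ k) - y t' $ i) \<le> - (Tt (y t') $ i - y t' $ i)" if "a < t'" "t' < b" for t'
      using h[OF that] by linarith
  qed (use assms in auto)
  moreover have "0 \<le> ((MAX k. y t0 $ k) - y a $ i) * exp (-(b - a))"
    using ymax[of t0 a i] assms by simp
  moreover have "\<gamma> * (1 - exp (-(b - a))) = \<gamma> + (((MAX k. y t0 $ k) - y a $ i) - \<gamma>) * exp (-(b - a))
      - ((MAX k. y t0 $ k) - y a $ i) * exp (-(b - a))" by (simp add: algebra_simps)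
  ultimately show ?thesis by linarith
qed

lemma lift_low:
  assumes "0 \<le> t0" "t0 \<le> a" "a \<le> b"
    and h: "\<And>t. a < t \<Longrightarrow> t < b \<Longrightarrow> \<gamma> \<le> Tt (y t) $ i - (MIN k. y t0 $ k)"
  shows "\<gamma> * (1 - exp (-(b - a))) \<le> y b $ i - (MIN k. y t0 $ k)"
proof -
  have "\<gamma> + ((y a $ i - (MIN k. y t0 $ k)) - \<gamma>) * exp (-(b - a)) \<le> y b $ i - (MIN k. y t0 $ k)"
  proof (rule ifactor[where D="\<lambda>t. Tt (y t) $ i - y t $ i"])
    show "continuous_on {a..b} (\<lambda>t. y t $ i - (MIN k. y t0 $ k))"
      by (intro continuous_intros continuous_on_subset[OF ycont0]) (use assms in auto)
    show "((\<lambda>t. y t $ i - (MIN k. y t0 $ k)) has_real_derivative (Tt (y t') $ i - y t' $ i)) (at t')"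
      if "a < t'" "t' < b" for t'
      using that assms by (auto intro!: derivative_eq_intros yder)
    show "\<gamma> - (y t' $ i - (MIN k. y t0 $ k)) \<le> Tt (y t') $ i - y t' $ i" if "a < t'" "t' < b" for t'
      using h[OF that] by linarith
  qed (use assms in auto)
  moreover have "0 \<le> (y a $ i - (MIN k. y t0 $ k)) * exp (-(b - a))"
    using ymin[of t0 a i] assms by simp
  moreover have "\<gamma> * (1 - exp (-(b - a))) = \<gamma> + ((y a $ i - (MIN k. y t0 $ k)) - \<gamma>) * exp (-(b - a))
      - (y a $ i - (MIN k. y t0 $ k)) * exp (-(b - a))" by (simp add: algebra_simps)
  ultimately show ?thesis by linarith
qed

end

primrec Gs :: "('s::finite \<Rightarrow> 'a::finite \<Rightarrow> 's \<Rightarrow> real) \<Rightarrow> 's \<Rightarrow> nat \<Rightarrow> 's set" where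
  "Gs p s1 0 = {s1}"
| "Gs p s1 (Suc k) = Gs p s1 k \<union> {s. \<forall>a. \<exists>s'\<in>Gs p s1 k. 0 < p s a s'}"

context mdpl begin

lemma grow:
  assumes ne: "G \<noteq> {}" and nu: "G \<noteq> UNIV"
  shows "\<exists>s. s \<notin> G \<and> (\<forall>a. \<exists>s'\<in>G. 0 < p s a s')"
proof (rule ccontr)
  assume "\<not> ?thesis"
  then have h: "\<forall>s. s \<notin> G \<longrightarrow> (\<exists>a. \<forall>s'\<in>G. \<not> 0 < p s a s')" by blast
  define \<pi> where "\<pi> s = (SOME a. \<forall>s'\<in>G. \<not> 0 < p s a s')" for s
  have \<pi>: "s \<notin> G \<Longrightarrow> s' \<in> G \<Longrightarrow> \<not> 0 < p s (\<pi> s) s'" for s s'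
    using someI_ex[of "\<lambda>a. \<forall>s'\<in>G. \<not> 0 < p s a s'"] h unfolding \<pi>_def by blast
  obtain s1 where s1: "s1 \<notin> G" using nu by blast
  obtain g where g: "g \<in> G" using ne by blast
  have "(s1, g) \<in> {(x, y). 0 < p x (\<pi> x) y}\<^sup>+" by (rule erg')
  then have "g \<notin> G"
    by (induction rule: trancl_induct) (use \<pi> s1 in auto)
  then show False using g by simp
qed

lemma Gs_card: "min (Suc k) CARD('s) \<le> card (Gs p s1 k)"
proof (induction k)
  case 0
  then show ?case by simp
next
  case (Suc k)
  have ne: "Gs p s1 k \<noteq> {}" by (induction k) auto
  show ?case
  proof (cases "Gs p s1 k = UNIV")
    case True
    then have "Gs p s1 (Suc k) = UNIV" by auto
    then show ?thesis by simp
  next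
    case False
    obtain s where s: "s \<notin> Gs p s1 k" "\<forall>a. \<exists>s'\<in>Gs p s1 k. 0 < p s a s'" using grow[OF ne False] by blast
    then have "Gs p s1 k \<subset> Gs p s1 (Suc k)" by auto
    then have "card (Gs p s1 k) < card (Gs p s1 (Suc k))" by (rule psubset_card_mono[OF finite])
    then show ?thesis using Suc by simp
  qed
qed

lemma Gs_full: "Gs p s1 CARD('s) = UNIV"
proof -
  have "CARD('s) \<le> card (Gs p s1 CARD('s))" using Gs_card[of "CARD('s)" s1] by simp
  moreover have "card (Gs p s1 CARD('s)) \<le> CARD('s)" by (rule card_mono) auto
  ultimately have "card (Gs p s1 CARD('s)) = CARD('s)" by (rule antisym[rotated])
  then show ?thesis by (intro card_eq_UNIV_imp_eq_UNIV) auto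
qed

end

context ysol begin

definition Gm where "Gm = (MAX i. gap (fst i) (snd i))"
definition Df where "Df \<theta> = \<theta> / (2 * (\<theta> + Gm))"
definition cl where "cl \<theta> = \<theta> / 2 * (1 - exp (- Df \<theta>))"
definition KK :: nat where "KK = CARD('s) + 1"
definition cK where "cK = pmin * (1 - exp (-1)) * exp (- real KK)"
definition cu where "cu \<theta> = \<theta> * exp (- real KK) * cK ^ CARD('s) * (1 - exp (-1))"

lemma Gm_nonneg: "0 \<le> Gm" unfolding Gm_def using gap_nonneg Max_fin_ge[of "\<lambda>i. gap (fst i) (snd i)" "(undefined, undefined)"]
  by (meson order_trans)
lemma gap_le_Gm: "gap s b \<le> Gm" unfolding Gm_def using Max_fin_ge[of "\<lambda>i. gap (fst i) (snd i)" "(s, b)"] by simp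

lemma Df_props: "0 < \<theta> \<Longrightarrow> 0 < Df \<theta> \<and> Df \<theta> \<le> 1/2 \<and> Df \<theta> * (Gm + \<theta>) = \<theta> / 2"
  unfolding Df_def using Gm_nonneg by (auto simp: field_simps)

lemma cl_pos: "0 < \<theta> \<Longrightarrow> 0 < cl \<theta>" unfolding cl_def using Df_props[of \<theta>] by auto

lemma cK_props: "0 < cK" "cK \<le> 1"
proof -
  have a: "0 < 1 - exp (-1::real)" by simp
  have b: "1 - exp (-1::real) \<le> 1" by simp
  have c: "exp (- real KK) \<le> 1" by simp
  show "0 < cK" unfolding cK_def using pmin_props(1) a by simp
  have "pmin * (1 - exp (-1)) \<le> 1 * 1" using pmin_le1 pmin_props(1) a b by (intro mult_mono) auto
  then have d: "pmin * (1 - exp (-1)) \<le> 1" by simp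
  have e: "0 \<le> pmin * (1 - exp (-1))" using pmin_props(1) a by simp
  have "pmin * (1 - exp (-1)) * exp (- real KK) \<le> 1 * 1" using d c e by (intro mult_mono) auto
  then show "cK \<le> 1" unfolding cK_def by simp
qed

lemma cu_pos: "0 < \<theta> \<Longrightarrow> 0 < cu \<theta>" unfolding cu_def using cK_props by simp

lemma lower_regime:
  assumes t0: "0 \<le> t0" and th: "0 < \<theta>"
    and all: "\<And>s. (MIN k. y t0 $ k) + \<theta> \<le> Vd (y t0) s"
  shows "(MIN k. y t0 $ k) + cl \<theta> \<le> y (t0 + Df \<theta>) $ j"
proof -
  define m where "m = (MIN k. y t0 $ k)"
  define \<Delta> where "\<Delta> = Df \<theta>"
  have D: "0 < \<Delta>" "\<Delta> \<le> 1/2" "\<Delta> * (Gm + \<theta>) = \<theta> / 2" using Df_props[OF th] unfolding \<Delta>_def by auto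
  have V: "m + \<theta> / 2 \<le> Vd (y t) s" if t: "t0 \<le> t" "t \<le> t0 + \<Delta>" for t s
  proof -
    obtain b where b: "Vd (y t0) s = y t0 $ (s, b) - gap s b" using Vd_ex by blast
    define E where "E = exp (- (t - t0))"
    have dl: "(y t0 $ (s, b) - m) * E \<le> y t $ (s, b) - m"
      unfolding m_def E_def using decay_low[OF t0 order_refl t(1)] .
    have E1: "1 - \<Delta> \<le> E" unfolding E_def using exp_ge_add_one_self[of "-(t - t0)"] t by linarith
    have E0: "0 \<le> E" unfolding E_def by simp
    have gth: "gap s b + \<theta> \<le> y t0 $ (s, b) - m" using all[of s] b unfolding m_def by linarith
    have g0: "0 \<le> gap s b" by (rule gap_nonneg)
    have "(gap s b + \<theta>) * E \<le> (y t0 $ (s, b) - m) * E" using gth E0 by (rule mult_right_mono)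
    moreover have "(gap s b + \<theta>) * (1 - \<Delta>) \<le> (gap s b + \<theta>) * E" using E1 g0 th by (intro mult_left_mono) auto
    moreover have "(gap s b + \<theta>) * \<Delta> \<le> (Gm + \<theta>) * \<Delta>" using gap_le_Gm[of s b] D by (intro mult_right_mono) auto
    ultimately have "gap s b + \<theta> / 2 \<le> y t $ (s, b) - m" using dl D(3) by (simp add: algebra_simps)
    then show ?thesis using Vd_ge[of "y t" s b] by linarith
  qed
  have "\<theta> / 2 * (1 - exp (-((t0 + \<Delta>) - t0))) \<le> y (t0 + \<Delta>) $ j - m"
    unfolding m_def
  proof (rule lift_low[OF t0 order_refl])
    show "t0 \<le> t0 + \<Delta>" using D by simp
    fix t assume "t0 < t" "t < t0 + \<Delta>"
    then have "m + \<theta> / 2 \<le> Tt (y t) $ j" using V by (intro Tt_ge) auto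
    then show "\<theta> / 2 \<le> Tt (y t) $ j - (MIN k. y t0 $ k)" unfolding m_def by simp
  qed
  then show ?thesis unfolding cl_def m_def \<Delta>_def by simp
qed

end

context ysol begin

lemma cascade:
  assumes t0: "0 \<le> t0" and th: "0 < \<theta>" and s1: "Vd (y t0) s1 \<le> (MAX j. y t0 $ j) - \<theta>"
  shows "k \<le> CARD('s) \<Longrightarrow> s \<in> Gs p s1 k \<Longrightarrow> t0 + real k \<le> t \<Longrightarrow> t \<le> t0 + real KK \<Longrightarrow>
    \<theta> * exp (- real KK) * cK ^ k \<le> (MAX j. y t0 $ j) - Vd (y t) s"
proof (induction k arbitrary: s t)
  case 0
  define M where "M = (MAX j. y t0 $ j)"
  have s: "s = s1" using 0 by simp
  have tt: "t0 \<le> t" "t \<le> t0 + real KK" using 0 by auto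
  obtain b where b: "Vd (y t) s1 = y t $ (s1, b) - gap s1 b" using Vd_ex by blast
  define E where "E = exp (- (t - t0))"
  have du: "(M - y t0 $ (s1, b)) * E \<le> M - y t $ (s1, b)"
    unfolding M_def E_def using decay_up[OF t0 order_refl tt(1)] .
  have th1: "\<theta> \<le> M - y t0 $ (s1, b) + gap s1 b" using Vd_ge[of "y t0" s1 b] s1 unfolding M_def by linarith
  have E1: "E \<le> 1" "0 \<le> E" unfolding E_def using tt by auto
  have gE: "gap s1 b * E \<le> gap s1 b" using mult_left_mono[of E 1 "gap s1 b"] E1 gap_nonneg[of s1 b] by simp
  have "\<theta> * E \<le> (M - y t0 $ (s1, b) + gap s1 b) * E" using th1 E1 by (intro mult_right_mono) auto
  also have "\<dots> = (M - y t0 $ (s1, b)) * E + gap s1 b * E" by (simp add: algebra_simps)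
  also have "\<dots> \<le> M - Vd (y t) s1" using du gE b by linarith
  finally have A: "\<theta> * E \<le> M - Vd (y t) s1" .
  have "exp (- real KK) \<le> E" unfolding E_def using tt by simp
  then have "\<theta> * exp (- real KK) \<le> \<theta> * E" using th by simp
  then show ?case using A s unfolding M_def by simp
next
  case (Suc k)
  define M where "M = (MAX j. y t0 $ j)"
  define \<gamma> where "\<gamma> = \<theta> * exp (- real KK) * cK ^ k"
  have \<gamma>0: "0 \<le> \<gamma>" unfolding \<gamma>_def using th cK_props by simp
  have tt: "t0 + real k + 1 \<le> t" "t \<le> t0 + real KK" using Suc.prems by auto
  have kN: "k \<le> CARD('s)" "Suc k \<le> CARD('s)" using Suc.prems by auto
  have goal: "\<gamma> * cK \<le> M - Vd (y t) s"
  proof (cases "s \<in> Gs p s1 k")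
    case True
    have "\<gamma> \<le> M - Vd (y t) s" unfolding \<gamma>_def M_def using Suc.IH[OF kN(1) True] tt by simp
    moreover have "\<gamma> * cK \<le> \<gamma>" using mult_left_mono[of cK 1 \<gamma>] \<gamma>0 cK_props by simp
    ultimately show ?thesis by linarith
  next
    case False
    then have new: "\<forall>a. \<exists>s'\<in>Gs p s1 k. 0 < p s a s'" using Suc.prems(2) by simp
    have "Vd (y t) s \<le> M - \<gamma> * cK"
    proof (rule Vd_le)
      fix a
      obtain s' where s': "s' \<in> Gs p s1 k" "0 < p s a s'" using new by blast
      have inflow: "pmin * \<gamma> \<le> M - Tt (y t') $ (s, a)" if t': "t0 + real k < t'" "t' < t0 + real k + 1" for t'
      proof -
        have IH': "\<gamma> \<le> M - Vd (y t') s'"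
          unfolding \<gamma>_def M_def using Suc.IH[OF kN(1) s'(1)] t' tt by simp
        have nn: "0 \<le> M - Vd (y t') s''" for s''
          unfolding M_def using ymax[OF t0, of t'] t' by (intro diff_ge_0_iff_ge[THEN iffD2] Vd_le) auto
        have "M - Tt (y t') $ (s, a) = (\<Sum>s''\<in>UNIV. p s a s'' * (M - Vd (y t') s''))"
          unfolding Tt_comp by (simp add: right_diff_distrib sum_subtractf p_sum_const)
        also have "\<dots> \<ge> p s a s' * (M - Vd (y t') s')"
          by (rule member_le_sum) (auto intro: mult_nonneg_nonneg p_nonneg nn)
        finally have B: "p s a s' * (M - Vd (y t') s') \<le> M - Tt (y t') $ (s, a)" .
        have "pmin * \<gamma> \<le> p s a s' * (M - Vd (y t') s')"
          using pmin_props(2)[OF s'(2)] IH' \<gamma>0 pmin_props(1) by (intro mult_mono) auto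
        then show ?thesis using B by linarith
      qed
      have L: "pmin * \<gamma> * (1 - exp (- ((t0 + real k + 1) - (t0 + real k)))) \<le> M - y (t0 + real k + 1) $ (s, a)"
        unfolding M_def by (rule lift_up[OF t0]) (use inflow M_def in auto)
      have Dc: "(M - y (t0 + real k + 1) $ (s, a)) * exp (- (t - (t0 + real k + 1))) \<le> M - y t $ (s, a)"
        unfolding M_def by (rule decay_up[OF t0]) (use tt in auto)
      have ex: "exp (- real KK) \<le> exp (- (t - (t0 + real k + 1)))" using tt by simp
      have nn: "0 \<le> pmin * \<gamma> * (1 - exp (-1))" using \<gamma>0 pmin_props(1) by simp
      have "pmin * \<gamma> * (1 - exp (-1)) * exp (- real KK) \<le> (M - y (t0 + real k + 1) $ (s, a)) * exp (- (t - (t0 + real k + 1)))"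
        using L ex nn by (intro mult_mono) auto
      then have "pmin * \<gamma> * (1 - exp (-1)) * exp (- real KK) \<le> M - y t $ (s, a)" using Dc by linarith
      moreover have "\<gamma> * cK = pmin * \<gamma> * (1 - exp (-1)) * exp (- real KK)" unfolding cK_def by simp
      ultimately show "y t $ (s, a) \<le> M - \<gamma> * cK" by linarith
    qed
    then show ?thesis by linarith
  qed
  have e: "\<theta> * exp (- real KK) * cK ^ Suc k = \<gamma> * cK" unfolding \<gamma>_def by (simp add: algebra_simps)
  show ?case unfolding e using goal unfolding M_def .
qed

lemma upper_regime:
  assumes t0: "0 \<le> t0" and th: "0 < \<theta>" and s1: "Vd (y t0) s1 \<le> (MAX j. y t0 $ j) - \<theta>"
  shows "y (t0 + real KK) $ i \<le> (MAX j. y t0 $ j) - cu \<theta>"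
proof -
  define M where "M = (MAX j. y t0 $ j)"
  define N where "N = CARD('s)"
  define \<gamma> where "\<gamma> = \<theta> * exp (- real KK) * cK ^ N"
  have KN: "real KK = real N + 1" unfolding KK_def N_def by simp
  have L: "\<gamma> * (1 - exp (- ((t0 + real N + 1) - (t0 + real N)))) \<le> M - y (t0 + real N + 1) $ i"
    unfolding M_def
  proof (rule lift_up[OF t0])
    fix t' assume t': "t0 + real N < t'" "t' < t0 + real N + 1"
    have "Tt (y t') $ i \<le> M - \<gamma>"
    proof (rule Tt_le)
      fix s'
      have "s' \<in> Gs p s1 N" unfolding N_def Gs_full by simp
      then have "\<gamma> \<le> M - Vd (y t') s'"
        unfolding \<gamma>_def M_def N_def using cascade[OF t0 th s1, of N s' t'] t' KN unfolding N_def by simp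
      then show "Vd (y t') s' \<le> M - \<gamma>" by linarith
    qed
    then show "\<gamma> \<le> (MAX j. y t0 $ j) - Tt (y t') $ i" unfolding M_def by linarith
  qed auto
  have e1: "\<gamma> * (1 - exp (- ((t0 + real N + 1) - (t0 + real N)))) = cu \<theta>" unfolding cu_def \<gamma>_def N_def by simp
  have e2: "t0 + real N + 1 = t0 + real KK" using KN by simp
  show ?thesis using L[unfolded e1] unfolding e2 M_def by linarith
qed

end

context ysol begin

definition sp where "sp t = (MAX j. y t $ j) - (MIN j. y t $ j)"

lemma Min_le_Max_fin: "(MIN j. (f::'b::finite \<Rightarrow> real) j) \<le> (MAX j. f j)"
proof -
  have "(MIN j. f j) \<le> f undefined" by (rule Min_le) auto
  also have "\<dots> \<le> (MAX j. f j)" by (rule Max_fin_ge)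
  finally show ?thesis .
qed

lemma sp_nonneg: "0 \<le> sp t" unfolding sp_def using Min_le_Max_fin[of "\<lambda>j. y t $ j"] by simp

lemma Mx_mono: "0 \<le> t0 \<Longrightarrow> t0 \<le> t \<Longrightarrow> (MAX j. y t $ j) \<le> (MAX j. y t0 $ j)"
  using ymax by (simp add: Max_fin_le_iff)

lemma Mn_mono: "0 \<le> t0 \<Longrightarrow> t0 \<le> t \<Longrightarrow> (MIN j. y t0 $ j) \<le> (MIN j. y t $ j)"
  using ymin by (simp add: Min_ge_iff)

lemma sp_mono: "0 \<le> t0 \<Longrightarrow> t0 \<le> t \<Longrightarrow> sp t \<le> sp t0"
  unfolding sp_def using Mx_mono Mn_mono by (smt (verit))

lemma contract:
  assumes t0: "0 \<le> t0" and th: "0 < \<theta>" and big: "2 * \<theta> \<le> sp t0"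
  shows "sp (t0 + real KK) \<le> sp t0 - min (cl \<theta>) (cu \<theta>)"
proof -
  define M where "M = (MAX j. y t0 $ j)"
  define m where "m = (MIN j. y t0 $ j)"
  have KK1: "1 \<le> real KK" unfolding KK_def by simp
  show ?thesis
  proof (cases "\<exists>s. Vd (y t0) s \<le> M - \<theta>")
    case True
    then obtain s1 where s1: "Vd (y t0) s1 \<le> M - \<theta>" by blast
    have "(MAX j. y (t0 + real KK) $ j) \<le> M - cu \<theta>"
      using upper_regime[OF t0 th s1[unfolded M_def]] unfolding M_def by (simp add: Max_fin_le_iff)
    moreover have "m \<le> (MIN j. y (t0 + real KK) $ j)" unfolding m_def by (rule Mn_mono) (use t0 in auto)
    ultimately show ?thesis unfolding sp_def M_def m_def by linarith
  next
    case False
    have "m + \<theta> \<le> Vd (y t0) s" for s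
    proof -
      have "\<not> Vd (y t0) s \<le> M - \<theta>" using False by blast
      then show ?thesis using big unfolding sp_def M_def m_def by linarith
    qed
    then have low: "m + cl \<theta> \<le> y (t0 + Df \<theta>) $ j" for j unfolding m_def by (rule lower_regime[OF t0 th])
    have Dp: "0 < Df \<theta>" "Df \<theta> \<le> 1/2" using Df_props[OF th] by auto
    have "m + cl \<theta> \<le> (MIN j. y (t0 + Df \<theta>) $ j)" using low by (simp add: Min_ge_iff)
    also have "\<dots> \<le> (MIN j. y (t0 + real KK) $ j)" by (rule Mn_mono) (use t0 Dp KK1 in auto)
    finally have A: "m + cl \<theta> \<le> (MIN j. y (t0 + real KK) $ j)" .
    have "(MAX j. y (t0 + real KK) $ j) \<le> M" unfolding M_def by (rule Mx_mono) (use t0 in auto)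
    then show ?thesis using A unfolding sp_def M_def m_def by linarith
  qed
qed

lemma sp_small:
  assumes e: "0 < \<epsilon>" shows "\<exists>T\<ge>0. sp T < \<epsilon>"
proof (rule ccontr)
  assume "\<not> ?thesis"
  then have big: "\<epsilon> \<le> sp T" if "0 \<le> T" for T using that by force
  define \<theta> where "\<theta> = \<epsilon> / 2"
  have th: "0 < \<theta>" unfolding \<theta>_def using e by simp
  define c where "c = min (cl \<theta>) (cu \<theta>)"
  have c: "0 < c" unfolding c_def using cl_pos[OF th] cu_pos[OF th] by simp
  have iter: "sp (real n * real KK) \<le> sp 0 - real n * c" for n
  proof (induction n)
    case 0
    then show ?case by simp
  next
    case (Suc n)
    have t0: "0 \<le> real n * real KK" by simp
    have "sp (real n * real KK + real KK) \<le> sp (real n * real KK) - c"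
      unfolding c_def by (rule contract[OF t0 th]) (use big[OF t0] \<theta>_def in simp)
    moreover have "real (Suc n) * real KK = real n * real KK + real KK" by (simp add: algebra_simps)
    ultimately show ?case using Suc by (simp add: algebra_simps)
  qed
  obtain n where n: "sp 0 / c < real n" using reals_Archimedean2 by blast
  then have "sp 0 < real n * c" using c by (simp add: field_simps)
  then have "sp (real n * real KK) < 0" using iter[of n] by linarith
  then show False using sp_nonneg by (metis not_le)
qed

lemma y_conv: "\<exists>L. \<forall>j. ((\<lambda>t. y t $ j) \<longlongrightarrow> L) at_top"
proof -
  define Mx where "Mx t = (MAX j. y t $ j)" for t
  have lb: "(MIN j. y 0 $ j) \<le> Mx t" if "0 \<le> t" for t
  proof -
    have "(MIN j. y 0 $ j) \<le> y t $ undefined" using ymin[of 0 t] that by simp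
    also have "\<dots> \<le> Mx t" unfolding Mx_def by (rule Max_fin_ge)
    finally show ?thesis .
  qed
  have bb: "bdd_below (Mx ` {0..})" by (rule bdd_belowI[of _ "MIN j. y 0 $ j"]) (use lb in auto)
  have ne: "Mx ` {0..} \<noteq> {}" by auto
  define L where "L = Inf (Mx ` {0..})"
  have Lle: "L \<le> Mx t" if "0 \<le> t" for t unfolding L_def using that by (intro cInf_lower[OF _ bb]) auto
  show ?thesis
  proof (intro exI allI)
    fix j
    show "((\<lambda>t. y t $ j) \<longlongrightarrow> L) at_top"
    proof (rule tendstoI)
      fix e :: real assume e: "0 < e"
      have "L < L + e" using e by simp
      then obtain T1 where T1: "T1 \<in> {0..}" "Mx T1 < L + e"
        unfolding L_def using cInf_less_iff[OF ne bb] by blast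
      obtain T2 where T2: "0 \<le> T2" "sp T2 < e" using sp_small[OF e] by blast
      show "\<forall>\<^sub>F t in at_top. dist (y t $ j) L < e"
        unfolding eventually_at_top_linorder
      proof (intro exI allI impI)
        fix t assume t: "max T1 T2 \<le> t"
        have t0: "0 \<le> t" "T1 \<le> t" "T2 \<le> t" using t T1 T2 by auto
        have a: "y t $ j \<le> Mx t" unfolding Mx_def by (rule Max_fin_ge)
        have b: "Mx t \<le> Mx T1" unfolding Mx_def by (rule Mx_mono) (use T1 t0 in auto)
        have c: "(MIN k. y t $ k) \<le> y t $ j" by (rule Min_le) auto
        have d: "sp t \<le> sp T2" by (rule sp_mono) (use T2 t0 in auto)
        have "Mx t - sp t = (MIN k. y t $ k)" unfolding Mx_def sp_def by simp
        then show "dist (y t $ j) L < e" unfolding dist_real_def abs_less_iff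
          using a b c d T1 T2 Lle[OF t0(1)] by linarith
      qed
    qed
  qed
qed

end

lemma clip_upper:
  assumes "a \<le> 0" "\<bar>\<rho>\<bar> \<le> R" "0 < \<eta>"
  shows "clip R \<eta> (\<rho> + a) - \<rho> \<le> max a (- \<eta>)"
  using assms unfolding clip_def by (auto simp: max_def min_def abs_le_iff)

lemma clip_lower:
  assumes "0 \<le> a" "\<bar>\<rho>\<bar> \<le> R" "0 < \<eta>"
  shows "min a \<eta> \<le> clip R \<eta> (\<rho> + a) - \<rho>"
  using assms unfolding clip_def by (auto simp: max_def min_def abs_le_iff)

lemma clip_fix: "\<bar>\<rho>\<bar> \<le> R \<Longrightarrow> 0 < \<eta> \<Longrightarrow> clip R \<eta> \<rho> = \<rho>"
  unfolding clip_def by (auto simp: max_def min_def abs_le_iff)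

lemma clip_mono: "x \<le> x' \<Longrightarrow> clip R \<eta> x \<le> clip R \<eta> x'"
  unfolding clip_def by (auto simp: max_def min_def)

lemma clip_cont: "continuous_on S (clip R \<eta>)"
  unfolding clip_def by (intro continuous_intros)

lemma zeta_conv:
  fixes \<zeta> \<epsilon> :: "real \<Rightarrow> real"
  assumes cont: "continuous_on {0..} \<zeta>"
    and der: "\<And>t. 0 < t \<Longrightarrow> (\<zeta> has_real_derivative (clip R \<eta> (\<rho> + \<epsilon> t - u * \<zeta> t) - \<rho>)) (at t)"
    and epsl: "(\<epsilon> \<longlongrightarrow> 0) at_top" and u: "0 < u" and eta: "0 < \<eta>" and rho: "\<bar>\<rho>\<bar> \<le> R"
  shows "(\<zeta> \<longlongrightarrow> 0) at_top"
proof (rule tendstoI)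
  fix e :: real assume e: "0 < e"
  define \<beta> where "\<beta> = e / 2"
  have b: "0 < \<beta>" unfolding \<beta>_def using e by simp
  define \<kappa> where "\<kappa> = min (u * \<beta> / 2) \<eta>"
  have k: "0 < \<kappa>" unfolding \<kappa>_def using u b eta by simp
  have "\<forall>\<^sub>F t in at_top. dist (\<epsilon> t) 0 < u * \<beta> / 2" using tendstoD[OF epsl, of "u * \<beta> / 2"] u b by simp
  then obtain T0' where T0': "\<And>t. T0' \<le> t \<Longrightarrow> \<bar>\<epsilon> t\<bar> < u * \<beta> / 2"
    unfolding eventually_at_top_linorder by auto
  define T0 where "T0 = max T0' 0"
  have T0: "0 \<le> T0" "\<And>t. T0 \<le> t \<Longrightarrow> \<bar>\<epsilon> t\<bar> < u * \<beta> / 2" unfolding T0_def using T0' by auto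
  define D where "D t = clip R \<eta> (\<rho> + \<epsilon> t - u * \<zeta> t) - \<rho>" for t
  have Dup: "D t \<le> - \<kappa>" if "T0 < t" "\<beta> \<le> \<zeta> t" for t
  proof -
    have "u * \<beta> \<le> u * \<zeta> t" using that u by simp
    then have a: "\<epsilon> t - u * \<zeta> t \<le> - (u * \<beta> / 2)" using T0(2)[of t] that by (simp add: abs_less_iff)
    have ub: "0 \<le> u * \<beta>" using u b by simp
    have a0: "\<epsilon> t - u * \<zeta> t \<le> 0" using a ub by linarith
    have "D t \<le> max (\<epsilon> t - u * \<zeta> t) (- \<eta>)" unfolding D_def
      using clip_upper[OF a0 rho eta] by (simp add: add_diff_eq)
    then show ?thesis unfolding \<kappa>_def using a by linarith
  qed
  have Dlow: "\<kappa> \<le> D t" if "T0 < t" "\<zeta> t \<le> - \<beta>" for t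
  proof -
    have "u * \<zeta> t \<le> u * (- \<beta>)" using that u by (intro mult_left_mono) auto
    then have a: "u * \<beta> / 2 \<le> \<epsilon> t - u * \<zeta> t" using T0(2)[of t] that by (simp add: abs_less_iff)
    have ub: "0 \<le> u * \<beta>" using u b by simp
    have a0: "0 \<le> \<epsilon> t - u * \<zeta> t" using a ub by linarith
    have "min (\<epsilon> t - u * \<zeta> t) \<eta> \<le> D t" unfolding D_def
      using clip_lower[OF a0 rho eta] by (simp add: add_diff_eq)
    then show ?thesis unfolding \<kappa>_def using a by linarith
  qed
  have contT: "continuous_on {T0..} \<zeta>" by (rule continuous_on_subset[OF cont]) (use T0 in auto)
  have derT: "(\<zeta> has_real_derivative D t) (at t)" if "T0 < t" for t
    unfolding D_def using der that T0 by auto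
  obtain t1 where t1: "T0 \<le> t1" "\<zeta> t1 \<le> \<beta>"
    using eventually_below[OF contT derT Dup k] by blast
  have up: "\<zeta> t \<le> \<beta>" if "t1 \<le> t" for t
  proof (rule stay_below[of t1 \<zeta> D \<beta> t])
    show "\<zeta> t1 \<le> \<beta>" by (rule t1(2))
    show "t1 \<le> t" by (rule that)
    show "continuous_on {t1..} \<zeta>" by (rule continuous_on_subset[OF cont]) (use T0 t1 in auto)
    show "(\<zeta> has_real_derivative D t) (at t)" if "t1 < t" for t using derT that t1 by auto
    show "D t \<le> 0" if "t1 < t" "\<beta> < \<zeta> t" for t using Dup[of t] that t1 k by auto
  qed
  define z where "z t = - \<zeta> t" for t
  have contz: "continuous_on {T0..} z" unfolding z_def by (intro continuous_intros contT)
  have derz: "(z has_real_derivative - D t) (at t)" if "T0 < t" for t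
    unfolding z_def by (auto intro!: derivative_eq_intros derT that)
  obtain t2 where t2: "T0 \<le> t2" "z t2 \<le> \<beta>"
    using eventually_below[OF contz derz _ k] Dlow unfolding z_def by force
  have lo: "z t \<le> \<beta>" if "t2 \<le> t" for t
  proof (rule stay_below[of t2 z "\<lambda>t. - D t" \<beta> t])
    show "z t2 \<le> \<beta>" by (rule t2(2))
    show "t2 \<le> t" by (rule that)
    show "continuous_on {t2..} z" unfolding z_def
      by (intro continuous_intros continuous_on_subset[OF cont]) (use T0 t2 in auto)
    show "(z has_real_derivative - D t) (at t)" if "t2 < t" for t using derz that t2 by auto
    show "- D t \<le> 0" if "t2 < t" "\<beta> < z t" for t using Dlow[of t] that t2 k unfolding z_def by auto
  qed
  show "\<forall>\<^sub>F t in at_top. dist (\<zeta> t) 0 < e"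
    unfolding eventually_at_top_linorder
  proof (intro exI allI impI)
    fix t assume "max t1 t2 \<le> t"
    then have "\<zeta> t \<le> \<beta>" "- \<zeta> t \<le> \<beta>" using up lo unfolding z_def by auto
    then show "dist (\<zeta> t) 0 < e" unfolding \<beta>_def using e by (simp add: abs_le_iff)
  qed
qed

locale qode = mdpq r p q \<rho>
  for r :: "'s::finite \<Rightarrow> 'a::finite \<Rightarrow> real" and p :: "'s \<Rightarrow> 'a \<Rightarrow> 's \<Rightarrow> real"
    and q :: "real^('s \<times> 'a)" and \<rho> :: real +
  fixes f :: "real^('s \<times> 'a) \<Rightarrow> real" and u \<eta> C :: real
  assumes lipC: "C-lipschitz_on UNIV f" and u_pos: "0 < u"
    and f_shift: "\<And>x c. f (x + c *\<^sub>R allones) = f x + c * u"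
    and eta: "0 < \<eta>" and fq: "f q = \<rho>"
begin

definition F where "F Q = Tbell r p Q - clip (rnorm r) \<eta> (f Q) *\<^sub>R allones - Q"

lemma rho_bd: "\<bar>\<rho>\<bar> \<le> rnorm r" using rho_bound[OF eq] .
lemma C0: "0 \<le> C" using lipC unfolding lipschitz_on_def by auto
lemma f_lip: "\<bar>f x - f x'\<bar> \<le> C * norm (x - x')"
  using lipC unfolding lipschitz_on_def dist_real_def dist_norm by auto
lemma f_cont: "continuous_on UNIV f" by (rule lipschitz_on_continuous_on[OF lipC])

lemma F_q: "F q = 0" unfolding F_def Tbell_q fq clip_fix[OF rho_bd eta] by simp

lemma rhs:
  "F Q0 + (clip (rnorm r) \<eta> (f Q0) - \<rho>) *\<^sub>R allones
     = Tt (Q0 - q + k0 *\<^sub>R allones) - (Q0 - q + k0 *\<^sub>R allones)"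
proof -
  define y0 where "y0 = Q0 - q + k0 *\<^sub>R allones"
  have Q0: "Q0 = (q + y0) + (- k0) *\<^sub>R allones" unfolding y0_def by (simp add: algebra_simps)
  have T1: "Tbell r p Q0 = Tbell r p (q + y0) + (- k0) *\<^sub>R allones"
    by (subst Q0, rule Tbell_shift)
  have T2: "Tbell r p (q + y0) = Tt y0 + q + \<rho> *\<^sub>R allones"
    using Tbell_diff[of y0] Tbell_q by (simp add: algebra_simps)
  have "F Q0 + (clip (rnorm r) \<eta> (f Q0) - \<rho>) *\<^sub>R allones = Tbell r p Q0 - \<rho> *\<^sub>R allones - Q0"
    unfolding F_def by (simp add: algebra_simps)
  also have "\<dots> = Tt y0 - y0" unfolding T1 T2 by (subst Q0) (simp add: algebra_simps)
  finally show ?thesis unfolding y0_def .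
qed

definition kf :: "(real \<Rightarrow> real^('s \<times> 'a)) \<Rightarrow> real \<Rightarrow> real" where
  "kf Q t = integral {0..t} (\<lambda>s. clip (rnorm r) \<eta> (f (Q s)) - \<rho>)"
definition yf :: "(real \<Rightarrow> real^('s \<times> 'a)) \<Rightarrow> real \<Rightarrow> real^('s \<times> 'a)" where
  "yf Q t = Q t - q + kf Q t *\<^sub>R allones"

lemma sol_facts:
  assumes sol: "ode_solution F Q"
  shows "continuous_on {0..} Q"
    and "\<And>t. 0 \<le> t \<Longrightarrow> (kf Q has_real_derivative (clip (rnorm r) \<eta> (f (Q t)) - \<rho>)) (at t within {0..})"
    and "ysol r p q \<rho> (yf Q)"
proof -
  have Qd: "(Q has_vector_derivative F (Q t)) (at t within {0..})" if "0 \<le> t" for t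
    using sol that unfolding ode_solution_def by auto
  show Qc: "continuous_on {0..} Q"
    unfolding continuous_on_eq_continuous_within using Qd has_vector_derivative_continuous by fastforce
  have fc: "continuous_on {0..} (\<lambda>s. f (Q s))"
    by (rule continuous_on_compose2[OF f_cont Qc]) auto
  have cc: "continuous_on {0..} (\<lambda>s. clip (rnorm r) \<eta> (f (Q s)) - \<rho>)"
    by (intro continuous_intros continuous_on_compose2[OF clip_cont fc]) auto
  show kd: "(kf Q has_real_derivative (clip (rnorm r) \<eta> (f (Q t)) - \<rho>)) (at t within {0..})" if "0 \<le> t" for t
    unfolding kf_def by (rule integral_deriv_within[OF cc that])
  show "ysol r p q \<rho> (yf Q)"
  proof unfold_locales
    fix t :: real assume t: "0 \<le> t"
    have "(yf Q has_vector_derivative (F (Q t) - 0 + ((kf Q t) *\<^sub>R 0 + (clip (rnorm r) \<eta> (f (Q t)) - \<rho>) *\<^sub>R allones)))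
        (at t within {0..})"
      unfolding yf_def by (intro derivative_intros Qd kd t)
    moreover have "F (Q t) - 0 + ((kf Q t) *\<^sub>R 0 + (clip (rnorm r) \<eta> (f (Q t)) - \<rho>) *\<^sub>R allones) = Tt (yf Q t) - yf Q t"
      unfolding yf_def using rhs[of "Q t" "kf Q t"] by simp
    ultimately show "(yf Q has_vector_derivative Tt (yf Q t) - yf Q t) (at t within {0..})" by simp
  qed
qed

end

context qode begin

lemma kf0: "kf Q 0 = 0" unfolding kf_def by simp

lemma kf_at:
  assumes sol: "ode_solution F Q" and t: "0 < t"
  shows "(kf Q has_real_derivative (clip (rnorm r) \<eta> (f (Q t)) - \<rho>)) (at t)"
  using within_to_at[of "kf Q" _ t] sol_facts(2)[OF sol, of t] t
  by (simp add: has_real_derivative_iff_has_vector_derivative)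

lemma kf_cont:
  assumes sol: "ode_solution F Q"
  shows "continuous_on {0..} (kf Q)"
  unfolding continuous_on_eq_continuous_within
  using sol_facts(2)[OF sol] DERIV_continuous by fastforce

lemma Q_decomp: "Q t = (q + yf Q t) + (- kf Q t) *\<^sub>R allones"
  unfolding yf_def by (simp add: algebra_simps)

lemma fQ: "f (Q t) = f (q + yf Q t) - kf Q t * u"
proof -
  have "f (Q t) = f ((q + yf Q t) + (- kf Q t) *\<^sub>R allones)" using Q_decomp[of Q t] by (rule arg_cong)
  also have "\<dots> = f (q + yf Q t) + (- kf Q t) * u" by (rule f_shift)
  finally show ?thesis by simp
qed

lemma sol_conv:
  assumes sol: "ode_solution F Q"
  shows "(Q \<longlongrightarrow> q) at_top"
proof -
  interpret Y: ysol r p q \<rho> "yf Q" by (rule sol_facts(3)[OF sol])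
  obtain L where L: "\<And>j. ((\<lambda>t. yf Q t $ j) \<longlongrightarrow> L) at_top" using Y.y_conv by blast
  have yL: "(yf Q \<longlongrightarrow> L *\<^sub>R allones) at_top"
    by (rule vec_tendstoI) (simp add: allones_def L)
  have qyL: "((\<lambda>t. q + yf Q t) \<longlongrightarrow> q + L *\<^sub>R allones) at_top" by (intro tendsto_intros yL)
  have fL: "((\<lambda>t. f (q + yf Q t)) \<longlongrightarrow> f (q + L *\<^sub>R allones)) at_top"
    by (rule continuous_on_tendsto_compose[OF f_cont qyL]) auto
  have fqL: "f (q + L *\<^sub>R allones) = \<rho> + L * u" using f_shift fq by simp
  define \<zeta> where "\<zeta> t = kf Q t - L" for t
  define \<epsilon> where "\<epsilon> t = f (q + yf Q t) - \<rho> - L * u" for t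
  have epsl: "(\<epsilon> \<longlongrightarrow> 0) at_top"
  proof -
    have "((\<lambda>t. f (q + yf Q t) - \<rho> - L * u) \<longlongrightarrow> f (q + L *\<^sub>R allones) - \<rho> - L * u) at_top"
      by (intro tendsto_intros fL)
    then show ?thesis unfolding \<epsilon>_def fqL by simp
  qed
  have zc: "continuous_on {0..} \<zeta>" unfolding \<zeta>_def by (intro continuous_intros kf_cont[OF sol])
  have zd: "(\<zeta> has_real_derivative (clip (rnorm r) \<eta> (\<rho> + \<epsilon> t - u * \<zeta> t) - \<rho>)) (at t)" if t: "0 < t" for t
  proof -
    have "\<rho> + \<epsilon> t - u * \<zeta> t = f (Q t)" unfolding \<epsilon>_def \<zeta>_def fQ by (simp add: algebra_simps)
    then show ?thesis unfolding \<zeta>_def using kf_at[OF sol t] by (auto intro!: derivative_eq_intros)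
  qed
  have zl: "(\<zeta> \<longlongrightarrow> 0) at_top" by (rule zeta_conv[OF zc zd epsl u_pos eta rho_bd])
  have kl: "(kf Q \<longlongrightarrow> L) at_top"
  proof -
    have "((\<lambda>t. \<zeta> t + L) \<longlongrightarrow> 0 + L) at_top" by (intro tendsto_intros zl)
    then show ?thesis unfolding \<zeta>_def by simp
  qed
  have "((\<lambda>t. (q + yf Q t) + (- kf Q t) *\<^sub>R allones) \<longlongrightarrow> (q + L *\<^sub>R allones) + (- L) *\<^sub>R allones) at_top"
    by (intro tendsto_intros qyL kl)
  then show ?thesis using Q_decomp[symmetric, of Q] by simp
qed

lemma sol_stab:
  assumes e: "0 < \<epsilon>"
  shows "\<exists>\<delta>>0. \<forall>Q. ode_solution F Q \<and> dist (Q 0) q < \<delta> \<longrightarrow> (\<forall>t\<ge>0. dist (Q t) q < \<epsilon>)"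
proof -
  define n where "n = real CARD('s \<times> 'a)"
  have n1: "1 \<le> n"
  proof -
    have "0 < CARD('s \<times> 'a)" by (rule finite_UNIV_card_ge_0) simp
    then have "1 \<le> CARD('s \<times> 'a)" by linarith
    then have "real 1 \<le> real CARD('s \<times> 'a)" by (rule of_nat_mono)
    then show ?thesis unfolding n_def by (simp only: of_nat_1)
  qed
  define K where "K = n * (1 + C * n / u)"
  have K: "0 < K" unfolding K_def using n1 C0 u_pos by (simp add: add_pos_nonneg)
  show ?thesis
  proof (intro exI[of _ "\<epsilon> / K"] conjI allI impI)
    show "0 < \<epsilon> / K" using e K by simp
    fix Q and t :: real assume h: "ode_solution F Q \<and> dist (Q 0) q < \<epsilon> / K" and t: "0 \<le> t"
    have sol: "ode_solution F Q" using h by simp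
    interpret Y: ysol r p q \<rho> "yf Q" by (rule sol_facts(3)[OF sol])
    define d0 where "d0 = norm (Q 0 - q)"
    have d0: "d0 < \<epsilon> / K" "0 \<le> d0" using h unfolding d0_def dist_norm by auto
    have y0: "yf Q 0 = Q 0 - q" unfolding yf_def kf0 by simp
    have comp: "\<bar>yf Q s $ j\<bar> \<le> d0" if s: "0 \<le> s" for s j
    proof -
      have c0: "\<bar>yf Q 0 $ k\<bar> \<le> d0" for k unfolding d0_def y0 by (rule component_le_norm_cart)
      have "yf Q s $ j \<le> (MAX k. yf Q 0 $ k)" using Y.ymax[of 0 s j] s by simp
      also have "\<dots> \<le> d0" using c0 by (simp add: Max_fin_le_iff abs_le_iff)
      finally have A: "yf Q s $ j \<le> d0" .
      have "\<forall>k. - d0 \<le> yf Q 0 $ k" using c0 by (simp add: abs_le_iff) (metis minus_le_iff)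
      then have "- d0 \<le> (MIN k. yf Q 0 $ k)" by (simp add: Min_ge_iff)
      also have "\<dots> \<le> yf Q s $ j" using Y.ymin[of 0 s j] s by simp
      finally show ?thesis using A by simp
    qed
    have ny: "norm (yf Q s) \<le> n * d0" if s: "0 \<le> s" for s
    proof -
      have "norm (yf Q s) \<le> (\<Sum>j\<in>UNIV. \<bar>yf Q s $ j\<bar>)" by (rule norm_le_l1_cart)
      also have "\<dots> \<le> (\<Sum>j\<in>(UNIV::('s\<times>'a) set). d0)" using comp[OF s] by (intro sum_mono) auto
      finally show ?thesis unfolding n_def by simp
    qed
    have fb: "\<bar>f (q + yf Q s) - \<rho>\<bar> \<le> C * (n * d0)" if s: "0 \<le> s" for s
    proof -
      have "\<bar>f (q + yf Q s) - f q\<bar> \<le> C * norm (q + yf Q s - q)" by (rule f_lip)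
      also have "\<dots> \<le> C * (n * d0)" using ny[OF s] C0 by (simp add: mult_left_mono)
      finally show ?thesis using fq by simp
    qed
    define B where "B = C * (n * d0) / u"
    have B0: "0 \<le> B" unfolding B_def using C0 n1 d0 u_pos by simp
    have Bu: "B * u = C * (n * d0)" unfolding B_def using u_pos by simp
    have kup: "kf Q s \<le> B" if s: "0 \<le> s" for s
    proof (rule stay_below[of 0 "kf Q" "\<lambda>t. clip (rnorm r) \<eta> (f (Q t)) - \<rho>" B s])
      show "continuous_on {0..} (kf Q)" by (rule kf_cont[OF sol])
      show "(kf Q has_real_derivative clip (rnorm r) \<eta> (f (Q t)) - \<rho>) (at t)" if "0 < t" for t
        by (rule kf_at[OF sol that])
      show "clip (rnorm r) \<eta> (f (Q t)) - \<rho> \<le> 0" if t: "0 < t" "B < kf Q t" for t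
      proof -
        have "B * u < kf Q t * u" using t u_pos by simp
        then have "f (Q t) \<le> \<rho>" unfolding fQ using fb[of t] t Bu by (simp add: abs_le_iff)
        then have "clip (rnorm r) \<eta> (f (Q t)) \<le> clip (rnorm r) \<eta> \<rho>" by (rule clip_mono)
        then show ?thesis using clip_fix[OF rho_bd eta] by simp
      qed
    qed (use kf0 B0 s in auto)
    have klow: "- kf Q s \<le> B" if s: "0 \<le> s" for s
    proof (rule stay_below[of 0 "\<lambda>t. - kf Q t" "\<lambda>t. - (clip (rnorm r) \<eta> (f (Q t)) - \<rho>)" B s])
      show "continuous_on {0..} (\<lambda>t. - kf Q t)" by (intro continuous_intros kf_cont[OF sol])
      show "((\<lambda>t. - kf Q t) has_real_derivative - (clip (rnorm r) \<eta> (f (Q t)) - \<rho>)) (at t)" if "0 < t" for t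
        by (intro derivative_intros kf_at[OF sol that])
      show "- (clip (rnorm r) \<eta> (f (Q t)) - \<rho>) \<le> 0" if t: "0 < t" "B < - kf Q t" for t
      proof -
        have "B * u < - kf Q t * u" using t u_pos by (intro mult_strict_right_mono) auto
        then have "\<rho> \<le> f (Q t)" unfolding fQ using fb[of t] t Bu by (simp add: abs_le_iff)
        then have "clip (rnorm r) \<eta> \<rho> \<le> clip (rnorm r) \<eta> (f (Q t))" by (rule clip_mono)
        then show ?thesis using clip_fix[OF rho_bd eta] by simp
      qed
    qed (use kf0 B0 s in auto)
    have ne: "norm (allones :: real^('s \<times> 'a)) \<le> n"
    proof -
      have "norm (allones :: real^('s \<times> 'a)) \<le> (\<Sum>j\<in>UNIV. \<bar>(allones :: real^('s \<times> 'a)) $ j\<bar>)"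
        by (rule norm_le_l1_cart)
      then show ?thesis unfolding n_def allones_def by simp
    qed
    have "dist (Q t) q = norm (yf Q t + (- kf Q t) *\<^sub>R allones)"
      unfolding dist_norm by (subst Q_decomp) (simp add: algebra_simps)
    also have "\<dots> \<le> norm (yf Q t) + \<bar>kf Q t\<bar> * norm (allones :: real^('s \<times> 'a))"
      using norm_triangle_ineq[of "yf Q t" "(- kf Q t) *\<^sub>R allones"] by simp
    also have "\<dots> \<le> n * d0 + B * n"
      using ny[OF t] kup[OF t] klow[OF t] ne B0 n1
      by (intro add_mono mult_mono) (auto simp: abs_le_iff)
    also have "\<dots> = d0 * K" unfolding B_def K_def using u_pos by (simp add: field_simps)
    also have "\<dots> < \<epsilon> / K * K" using d0 K by (intro mult_strict_right_mono) auto
    also have "\<dots> = \<epsilon>" using K by simp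
    finally show "dist (Q t) q < \<epsilon>" .
  qed
qed

end

theorem lemma2:
  fixes r :: "'s::finite \<Rightarrow> 'a::finite \<Rightarrow> real"
    and p :: "'s \<Rightarrow> 'a \<Rightarrow> 's \<Rightarrow> real"
    and f :: "real ^ ('s \<times> 'a) \<Rightarrow> real"
    and u \<eta> :: real
  assumes mdp: "is_mdp p"
    and erg: "ergodic_mdp p"
    and lip: "\<exists>C. C-lipschitz_on UNIV f"
    and u_pos: "u > 0"
    and f_e: "f allones = u"
    and f_shift: "\<And>x c. f (x + c *\<^sub>R allones) = f x + c * u"
    and f_hom: "\<And>x c. f (c *\<^sub>R x) = c * f x"
    and eta: "\<eta> > 0"
  shows "\<exists>q \<rho>. (\<forall>s0. opt_avg_reward r p s0 = \<rho>)
      \<and> (\<forall>s a. q $ (s, a) = r s a - \<rho> + (\<Sum>s'\<in>UNIV. p s a s' * (MAX a'. q $ (s', a'))))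
      \<and> \<rho> = f q
      \<and> (\<forall>q'. (\<forall>s a. q' $ (s, a) = r s a - \<rho> + (\<Sum>s'\<in>UNIV. p s a s' * (MAX a'. q' $ (s', a'))))
              \<and> \<rho> = f q' \<longrightarrow> q' = q)
      \<and> globally_asymptotically_stable
          (\<lambda>Q. Tbell r p Q - clip (rnorm r) \<eta> (f Q) *\<^sub>R allones - Q) q"
proof -
  interpret M: mdpl r p by unfold_locales (rule mdp, rule erg)
  obtain C where lipC: "C-lipschitz_on UNIV f" using lip by blast
  obtain q0 \<rho> where e0: "\<forall>s a. q0 $ (s, a) = r s a - \<rho> + (\<Sum>s'\<in>UNIV. p s a s' * (MAX a'. q0 $ (s', a')))"
    using M.exists_sol by blast
  define c where "c = (\<rho> - f q0) / u"
  define q where "q = q0 + c *\<^sub>R allones"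
  have qc: "q $ (s, a) = q0 $ (s, a) + c" for s a unfolding q_def allones_def by simp
  have eq: "\<forall>s a. q $ (s, a) = r s a - \<rho> + (\<Sum>s'\<in>UNIV. p s a s' * (MAX a'. q $ (s', a')))"
  proof (intro allI)
    fix s a
    have m: "(MAX a'. q $ (s', a')) = (MAX a'. q0 $ (s', a')) + c" for s'
      unfolding qc by (rule Max_fin_add)
    have "(\<Sum>s'\<in>UNIV. p s a s' * (MAX a'. q $ (s', a'))) = (\<Sum>s'\<in>UNIV. p s a s' * (MAX a'. q0 $ (s', a'))) + c"
      unfolding m by (simp add: distrib_left sum.distrib M.p_sum_const)
    then show "q $ (s, a) = r s a - \<rho> + (\<Sum>s'\<in>UNIV. p s a s' * (MAX a'. q $ (s', a')))"
      using e0[rule_format, of s a] qc[of s a] by simp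
  qed
  have fq: "f q = \<rho>" unfolding q_def f_shift c_def using u_pos by simp
  interpret Q: qode r p q \<rho> f u \<eta> C
    by unfold_locales (fact mdp erg eq lipC u_pos f_shift eta fq)+
  have Feq: "(\<lambda>Q. Tbell r p Q - clip (rnorm r) \<eta> (f Q) *\<^sub>R allones - Q) = Q.F"
    by (rule ext) (simp add: Q.F_def)
  show ?thesis
  proof (intro exI conjI)
    show "\<forall>s0. opt_avg_reward r p s0 = \<rho>" using M.opt_avg_eq[OF eq] by blast
    show "\<forall>s a. q $ (s, a) = r s a - \<rho> + (\<Sum>s'\<in>UNIV. p s a s' * (MAX a'. q $ (s', a')))" by (rule eq)
    show "\<rho> = f q" using fq by simp
    show "\<forall>q'. (\<forall>s a. q' $ (s, a) = r s a - \<rho> + (\<Sum>s'\<in>UNIV. p s a s' * (MAX a'. q' $ (s', a'))))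
              \<and> \<rho> = f q' \<longrightarrow> q' = q"
    proof (intro allI impI)
      fix q' assume h: "(\<forall>s a. q' $ (s, a) = r s a - \<rho> + (\<Sum>s'\<in>UNIV. p s a s' * (MAX a'. q' $ (s', a'))))
              \<and> \<rho> = f q'"
      obtain D where D: "q' = q + D *\<^sub>R allones" using M.uniq_shift[of q' \<rho> q] h eq by blast
      have "\<rho> = \<rho> + D * u" using h fq f_shift[of q D] D by simp
      then have "D = 0" using u_pos by simp
      then show "q' = q" using D by simp
    qed
    show "globally_asymptotically_stable (\<lambda>Q. Tbell r p Q - clip (rnorm r) \<eta> (f Q) *\<^sub>R allones - Q) q"
      unfolding Feq globally_asymptotically_stable_def
      using Q.F_q Q.sol_stab Q.sol_conv by blast
  qed
qed

end
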